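(* Assume the setting described in the context, and let $K\in\mathbb{N}$ and $\omega\in\Omega$. For every $d\in\mathbb{N}$, $\varepsilon\in(0,1)$ let $f_\varepsilon\in C(\mathbb{R},\mathbb{R})$ and $\Phi_{f_\varepsilon},\Phi_{g^d_\varepsilon}\in\mathbf{N}$ satisfy $\mathcal{R}(\Phi_{f_\varepsilon})=f_\varepsilon$ and $\mathcal{R}(\Phi_{g^d_\varepsilon})=g^d_\varepsilon$. For every $d\in\mathbb{N}$, $\varepsilon\in(0,1)$ let $U^{d,\theta,K,\varepsilon}_{n,m}\colon[0,T]\times\mathbb{R}^d\times\Omega\to\mathbb{R}$, $\theta\in\Theta$, $n,m\in\mathbb{Z}$, satisfy for all $\theta\in\Theta$, $n\in\mathbb{N}_0$, $m\in\mathbb{N}$, $t\in[0,T]$, $x\in\mathbb{R}^d$ $$U^{d,\theta,K,\varepsilon}_{n,m}(t,x)=\frac{\mathbb{1}_{\mathbb{N}}(n)}{m^n}\sum_{i=1}^{m^n}g^d_\varepsilon\big(X^{d,(\theta,0,-i),K,\varepsilon,t,x}_T\big)+\sum_{\ell=0}^{n-1}\frac{T-t}{m^{n-\ell}}\sum_{i=1}^{m^{n-\ell}}\Big(f_\varepsilon\circ U^{d,(\theta,\ell,i),K,\varepsilon}_{\ell,m}-\mathbb{1}_{\mathbb{N}}(\ell)\,f_\varepsilon\circ U^{d,(\theta,-\ell,i),K,\varepsilon}_{\ell-1,m}\Big)\Big(\mathfrak{T}^{(\theta,\ell,i)}_t,X^{d,(\theta,\ell,i),K,\varepsilon,t,x}_{\mathfrak{T}^{(\theta,\ell,i)}_t}\Big).$$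 Let $(c_{d,\varepsilon})_{d\in\mathbb{N},\varepsilon\in(0,1)}\subseteq\mathbb{R}$ satisfy $c_{d,\varepsilon}\ge2d+|||\mathcal{D}(\Phi_{f_\varepsilon})|||+|||\mathcal{D}(\Phi_{g^d_\varepsilon})|||+|||\mathcal{D}(\Phi_{\beta^d_\varepsilon})|||+|||\mathcal{D}(\Phi_{\sigma^d_\varepsilon,0})|||+|||\mathcal{D}(\Phi_{F^d_\varepsilon,0})|||$. Then for all $m\in\mathbb{N}$, $n\in\mathbb{N}_0$, $d\in\mathbb{N}$, $\varepsilon\in(0,1)$ there exists $(\Phi^{d,\theta,K,\varepsilon}_{n,m,t})_{t\in[0,T],\theta\in\Theta}\subseteq\mathbf{N}$ such that: (i) $\mathcal{D}(\Phi^{d,\theta_1,K,\varepsilon}_{n,m,t_1})=\mathcal{D}(\Phi^{d,\theta_2,K,\varepsilon}_{n,m,t_2})$ for all $t_1,t_2\in[0,T]$, $\theta_1,\theta_2\in\Theta$; (ii) for all $t\in[0,T]$, $\theta\in\Theta$: $\dim(\mathcal{D}(\Phi^{d,\theta,K,\varepsilon}_{n,m,t}))=(n+1)\big[K\big(\max\{\dim(\mathcal{D}(\Phi_{\beta^d_\varepsilon})),\dim(\mathcal{D}(\Phi_{\sigma^d_\varepsilon,0})),\dim(\mathcal{D}(\Phi_{F^d_\varepsilon,0}))\}-1\big)+1\big]+n(\dim(\mathcal{D}(\Phi_{f_\varepsilon}))-2)+\dim(\mathcal{D}(\Phi_{g^d_\varepsilon}))-1$; (iii) for all $t\in[0,T]$,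 $\theta\in\Theta$: $|||\mathcal{D}(\Phi^{d,\theta,K,\varepsilon}_{n,m,t})|||\le c_{d,\varepsilon}(3m)^n$; (iv) for all $t\in[0,T]$, $\theta\in\Theta$, $x\in\mathbb{R}^d$: $U^{d,\theta,K,\varepsilon}_{n,m}(t,x,\omega)=(\mathcal{R}(\Phi^{d,\theta,K,\varepsilon}_{n,m,t}))(x)$.
   Context: Setting. $T\in(0,\infty)$, $c\in[2,\infty)$, $f\in C(\mathbb{R},\mathbb{R})$. For each $d\in\mathbb{N}$: $\beta^d\in C(\mathbb{R}^d,\mathbb{R}^d)$, $\sigma^d\in C(\mathbb{R}^d,\mathbb{R}^{d\times d})$, $\gamma^d\in C(\mathbb{R}^{2d},\mathbb{R}^d)$, $g^d\in C(\mathbb{R}^d,\mathbb{R})$, $\nu^d$ a Lévy measure on $\mathcal{B}(\mathbb{R}^d\setminus\{0\})$, satisfying: (A1) there is $C_d$ with $\|\gamma^d(x,z)\|^2\le C_d(1\wedge\|z\|^2)$, $\|\gamma^d(x,z)-\gamma^d(y,z)\|^2\le C_d\|x-y\|^2(1\wedge\|z\|^2)$; (A2) $D_x\gamma^d(x,z)$ exists and for some $\lambda_d>0$, $\lambda_d\le|\det(I_d+\delta D_x\gamma^d(x,z))|$ for all $x,z$, $\delta\in[0,1]$; (A3) $\|\beta^d(x)-\beta^d(y)\|^2+\|\sigma^d(x)-\sigma^d(y)\|_F^2+\int\|\gamma^d(x,z)-\gamma^d(y,z)\|^2\nu^d(dz)\le c\|x-y\|^2$, $|f(w_1)-f(w_2)|^2\le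 c|w_1-w_2|^2$, $|g^d(x)-g^d(y)|^2\le cd^cT^{-1}\|x-y\|^2$, $\|\beta^d(0)\|^2+\|\sigma^d(0)\|_F^2+\int\|\gamma^d(0,z)\|^2\nu^d(dz)+T^3(|f(0)|+1)^2+T|g^d(0)|^2\le cd^c$ (integrals over $\mathbb{R}^d\setminus\{0\}$). For $d\in\mathbb{N}$, $\varepsilon\in(0,1)$: $\beta^d_\varepsilon\in C(\mathbb{R}^d,\mathbb{R}^d)$, $\sigma^d_\varepsilon\in C(\mathbb{R}^d,\mathbb{R}^{d\times d})$, $\gamma^d_\varepsilon\in C(\mathbb{R}^{2d},\mathbb{R}^d)$, $g^d_\varepsilon\in C(\mathbb{R}^d,\mathbb{R})$ satisfying: (B1) the analogue of (A1) with a constant $C_{d,\varepsilon}$; (B2) $\|\beta^d_\varepsilon(x)-\beta^d_\varepsilon(y)\|^2+\|\sigma^d_\varepsilon(x)-\sigma^d_\varepsilon(y)\|_F^2+\int\|\gamma^d_\varepsilon(x,z)-\gamma^d_\varepsilon(y,z)\|^2\nu^d(dz)\le c\|x-y\|^2$, $|g^d_\varepsilon(x)-g^d_\varepsilon(y)|^2\le cd^cT^{-1}\|x-y\|^2$, $\|\beta^d_\varepsilon(0)\|^2+\|\sigma^d_\varepsilon(0)\|_F^2+\int\|\gamma^d_\varepsilon(0,z)\|^2\nu^d(dz)+T|g^d_\varepsilon(0)|^2\le cd^c$, and $\|\beta^d_\varepsilon(x)-\beta^d(x)\|^2+\|\sigma^d_\varepsilon(x)-\sigma^d(x)\|_F^2+\int\|\gamma^d_\varepsilon(x,z)-\gamma^d(x,z)\|^2\nu^d(dz)+|g^d_\varepsilon(x)-g^d(x)|^2\le\varepsilon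 cd^c(d^c+\|x\|^2)$ for all $x,y$. Moreover, for every $d,\varepsilon$, $F^d_\varepsilon\colon\mathbb{R}^d\to\mathbb{R}^{d\times d}$ and $G^d\colon\mathbb{R}^d\to\mathbb{R}^d$ are measurable with $\gamma^d_\varepsilon(y,z)=F^d_\varepsilon(y)G^d(z)$; for every $v\in\mathbb{R}^d$, $\Phi_{\beta^d_\varepsilon},\Phi_{\sigma^d_\varepsilon,v},\Phi_{F^d_\varepsilon,v}\in\mathbf{N}$ satisfy $\beta^d_\varepsilon=\mathcal{R}(\Phi_{\beta^d_\varepsilon})$, $\sigma^d_\varepsilon(\cdot)v=\mathcal{R}(\Phi_{\sigma^d_\varepsilon,v})$, $F^d_\varepsilon(\cdot)v=\mathcal{R}(\Phi_{F^d_\varepsilon,v})$, $\mathcal{D}(\Phi_{\sigma^d_\varepsilon,v})=\mathcal{D}(\Phi_{\sigma^d_\varepsilon,0})$, $\mathcal{D}(\Phi_{F^d_\varepsilon,v})=\mathcal{D}(\Phi_{F^d_\varepsilon,0})$. Probability. $(\Omega,\mathcal{F},\mathbb{P},(\mathbb{F}_t)_{t\in[0,T]})$ a filtered probability space with the usual conditions; $\Theta=\bigcup_{n\in\mathbb{N}}\mathbb{Z}^n$; $\mathfrak{t}^\theta$, $\theta\in\Theta$, i.i.d. uniform on $[0,1]$, $\mathfrak{T}^\theta_t=t+(T-t)\mathfrak{t}^\theta$; for each $d$, $W^{d,\theta}$ i.i.d. standard $d$-dim $(\mathbb{F}_t)$-Brownian motions, $N^{d,\theta}$ independent $(\mathbb{F}_t)$-Poisson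 random measures on $[0,\infty)\times(\mathbb{R}^d\setminus\{0\})$ with compensator $\nu^d(dz)dt$, $\tilde N^{d,\theta}=N^{d,\theta}-\nu^d(dz)dt$; $\mathcal{F}_0$, $(\mathfrak{t}^\theta)$, $(N^{d,\theta})$, $(W^{d,\theta})$ independent. $\lfloor t\rfloor_K=\max(\{0,\frac TK,\dots,T\}\cap((-\infty,t)\cup\{0\}))$ and $X^{d,\theta,K,\varepsilon,t,x}$ on $[t,T]$ satisfies $X_s=x+\int_t^s\beta^d_\varepsilon(X_{\max\{t,\lfloor u-\rfloor_K\}})du+\int_t^s\sigma^d_\varepsilon(X_{\max\{t,\lfloor u-\rfloor_K\}})dW^{d,\theta}_u+\int_t^s\int_{\mathbb{R}^d\setminus\{0\}}\gamma^d_\varepsilon(X_{\max\{t,\lfloor u-\rfloor_K\}},z)\tilde N^{d,\theta}(dz,du)$. Networks. $\mathbf{A}_k$ componentwise ReLU; $\mathbf{N}=\bigcup_{H\in\mathbb{N}}\bigcup_{(k_0,\dots,k_{H+1})\in\mathbb{N}^{H+2}}\prod_{j=1}^{H+1}(\mathbb{R}^{k_j\times k_{j-1}}\times\mathbb{R}^{k_j})$; for $\Phi=((W_1,B_1),\dots,(W_{H+1},B_{H+1}))$: $\mathcal{D}(\Phi)=(k_0,\dots,k_{H+1})$, $\mathcal{R}(\Phi)\in C(\mathbb{R}^{k_0},\mathbb{R}^{k_{H+1}})$, $(\mathcal{R}(\Phi))(x_0)=W_{H+1}x_H+B_{H+1}$ with $x_j=\mathbf{A}_{k_j}(W_jx_{j-1}+B_j)$.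 For a vector $x=(x_1,\dots,x_k)$: $\dim(x)=k$, $|||x|||=\max_i|x_i|$. $\|\cdot\|$ Euclidean, $\|\cdot\|_F$ Frobenius norm. *)

theory Defs
  imports "HOL-Analysis.Finite_Product_Measure" "Jordan_Normal_Form.Determinant"
begin

text \<open>Points of R^d are represented by vectors v :: real vec with dim_vec v = d,
  d x d matrices by m :: real mat with dim_row m = dim_col m = d.\<close>

definition vnorm2 :: "real vec \<Rightarrow> real" where
  "vnorm2 v = (\<Sum>i<dim_vec v. (v $ i)^2)"

definition vnorm :: "real vec \<Rightarrow> real" where
  "vnorm v = sqrt (vnorm2 v)"

definition frob2 :: "real mat \<Rightarrow> real" where
  "frob2 A = (\<Sum>i<dim_row A. \<Sum>j<dim_col A. (A $$ (i,j))^2)"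

definition vec_borel :: "nat \<Rightarrow> real vec measure" where
  "vec_borel d = vimage_algebra {v. dim_vec v = d} (\<lambda>v. restrict (\<lambda>i. v $ i) {..<d})
      (Pi\<^sub>M {..<d} (\<lambda>_. borel))"

definition levy_space :: "nat \<Rightarrow> real vec measure" where
  "levy_space d = restrict_space (vec_borel d) {z. dim_vec z = d \<and> z \<noteq> 0\<^sub>v d}"

definition levy_measure :: "nat \<Rightarrow> real vec measure \<Rightarrow> bool" where
  "levy_measure d \<nu> \<longleftrightarrow> sets \<nu> = sets (levy_space d) \<and>
     (\<integral>\<^sup>+ z. ennreal (min 1 (vnorm2 z)) \<partial>\<nu>) < \<infinity>"

definition vcont2 :: "nat \<Rightarrow> (real vec \<Rightarrow> real vec \<Rightarrow> real vec) \<Rightarrow> bool" where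
  "vcont2 d h \<longleftrightarrow> (\<forall>x z. dim_vec x = d \<longrightarrow> dim_vec z = d \<longrightarrow>
     (\<forall>e>0. \<exists>\<delta>>0. \<forall>x' z'. dim_vec x' = d \<longrightarrow> dim_vec z' = d \<longrightarrow>
        vnorm (x' - x) < \<delta> \<longrightarrow> vnorm (z' - z) < \<delta> \<longrightarrow> vnorm (h x' z' - h x z) < e))"

definition vec_has_jacobian :: "nat \<Rightarrow> (real vec \<Rightarrow> real vec) \<Rightarrow> real vec \<Rightarrow> real mat \<Rightarrow> bool" where
  "vec_has_jacobian d h x Jm \<longleftrightarrow> Jm \<in> carrier_mat d d \<and>
     (\<forall>e>0. \<exists>\<delta>>0. \<forall>k. dim_vec k = d \<longrightarrow> vnorm k < \<delta> \<longrightarrow>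
        vnorm (h (x + k) - h x - Jm *\<^sub>v k) \<le> e * vnorm k)"

type_synonym net = "(real mat \<times> real vec) list"

definition arch :: "net \<Rightarrow> nat list" where
  "arch \<Phi> = dim_col (fst (hd \<Phi>)) # map (\<lambda>(W,B). dim_vec B) \<Phi>"

definition is_net :: "net \<Rightarrow> bool" where
  "is_net \<Phi> \<longleftrightarrow> length \<Phi> \<ge> 2 \<and> (\<forall>k\<in>set (arch \<Phi>). k \<ge> 1) \<and>
     (\<forall>j<length \<Phi>. fst (\<Phi> ! j) \<in> carrier_mat (arch \<Phi> ! (j+1)) (arch \<Phi> ! j))"

definition relu :: "real vec \<Rightarrow> real vec" where
  "relu v = map_vec (\<lambda>y. max 0 y) v"

fun realize :: "net \<Rightarrow> real vec \<Rightarrow> real vec" where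
  "realize [] x = x"
| "realize [(W,B)] x = W *\<^sub>v x + B"
| "realize ((W,B) # l # L) x = realize (l # L) (relu (W *\<^sub>v x + B))"

definition maxnorm :: "nat list \<Rightarrow> nat" where
  "maxnorm xs = Max (set xs)"

definition flrK :: "real \<Rightarrow> nat \<Rightarrow> real \<Rightarrow> real" where
  "flrK T K t = Max ({0} \<union> {T * real j / real K | j. j \<le> K \<and> T * real j / real K < t})"

end

theory Submission
  imports Defs
begin

fun wfn :: "nat \<Rightarrow> net \<Rightarrow> nat \<Rightarrow> bool" where
  "wfn a [] b = False"
| "wfn a [(W,B)] b = (W \<in> carrier_mat b a \<and> dim_vec B = b \<and> 1 \<le> a \<and> 1 \<le> b)"
| "wfn a ((W,B)#l#L) b = (W \<in> carrier_mat (dim_vec B) a \<and> 1 \<le> a \<and> 1 \<le> dim_vec B \<and> wfn (dim_vec B) (l#L) b)"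

definition dms :: "net \<Rightarrow> nat list" where
  "dms \<Phi> = map (\<lambda>(W,B). dim_vec B) \<Phi>"

lemma dms_simps[simp]: "dms [] = []" "dms ((W,B)#L) = dim_vec B # dms L"
  by (auto simp: dms_def)

lemma realize_dim: "wfn a \<Phi> b \<Longrightarrow> dim_vec x = a \<Longrightarrow> dim_vec (realize \<Phi> x) = b"
  by (induction \<Phi> x arbitrary: a rule: realize.induct) (auto simp: relu_def)

lemma wfn_arch: "wfn a \<Phi> b \<Longrightarrow> arch \<Phi> = a # dms \<Phi>"
  by (induction a \<Phi> b rule: wfn.induct) (auto simp: arch_def dms_def)

lemma wfn_last: "wfn a \<Phi> b \<Longrightarrow> last (dms \<Phi>) = b"
  by (induction a \<Phi> b rule: wfn.induct) auto

lemma wfn_ge1: "wfn a \<Phi> b \<Longrightarrow> k \<in> set (a # dms \<Phi>) \<Longrightarrow> 1 \<le> k"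
  by (induction a \<Phi> b arbitrary: k rule: wfn.induct) auto

lemma wfn_b: "wfn a \<Phi> b \<Longrightarrow> 1 \<le> a \<and> 1 \<le> b"
  by (induction a \<Phi> b rule: wfn.induct) auto

lemma wfn_carrier: "wfn a \<Phi> b \<Longrightarrow> j < length \<Phi> \<Longrightarrow>
   fst (\<Phi>!j) \<in> carrier_mat ((a # dms \<Phi>) ! (j+1)) ((a # dms \<Phi>) ! j)"
proof (induction a \<Phi> b arbitrary: j rule: wfn.induct)
  case (3 a W B l L b)
  then show ?case by (cases j) auto
qed auto

lemma wfn_is_net: "wfn a \<Phi> b \<Longrightarrow> 2 \<le> length \<Phi> \<Longrightarrow> is_net \<Phi>"
  unfolding is_net_def using wfn_arch[of a \<Phi> b] wfn_ge1[of a \<Phi> b] wfn_carrier[of a \<Phi> b]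
  by auto

lemma wfn_of_conds: "\<Phi> \<noteq> [] \<Longrightarrow> (\<forall>k\<in>set (a # dms \<Phi>). 1 \<le> k) \<Longrightarrow>
   (\<forall>j<length \<Phi>. fst (\<Phi>!j) \<in> carrier_mat ((a # dms \<Phi>) ! (j+1)) ((a # dms \<Phi>) ! j)) \<Longrightarrow>
   wfn a \<Phi> (last (dms \<Phi>))"
proof (induction a \<Phi> "last (dms \<Phi>)" rule: wfn.induct)
  case (2 a W B)
  then show ?case by (auto dest: spec[of _ 0])
next
  case (3 a W B l L)
  have h0: "W \<in> carrier_mat (dim_vec B) a" using "3.prems"(3) by (auto dest: spec[of _ 0])
  have "wfn (dim_vec B) (l#L) (last (dms (l#L)))"
  proof (rule "3.hyps")
    show "\<forall>j<length (l#L). fst ((l#L)!j) \<in> carrier_mat ((dim_vec B # dms (l#L)) ! (j+1)) ((dim_vec B # dms (l#L)) ! j)"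
    proof (intro allI impI)
      fix j assume "j < length (l#L)"
      then have "Suc j < length ((W,B)#l#L)" by simp
      with "3.prems"(3) show "fst ((l#L)!j) \<in> carrier_mat ((dim_vec B # dms (l#L)) ! (j+1)) ((dim_vec B # dms (l#L)) ! j)"
        by (auto dest: spec[of _ "Suc j"])
    qed
  qed (use "3.prems" in \<open>(cases l, auto)+\<close>)
  then show ?case using h0 "3.prems" by (cases l) auto
qed auto

lemma is_net_wfn: "is_net \<Phi> \<Longrightarrow> wfn (hd (arch \<Phi>)) \<Phi> (last (arch \<Phi>))"
proof -
  assume n: "is_net \<Phi>"
  then have ne: "\<Phi> \<noteq> []" unfolding is_net_def by auto
  have a: "arch \<Phi> = dim_col (fst (hd \<Phi>)) # dms \<Phi>" by (simp add: arch_def dms_def)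
  have "wfn (dim_col (fst (hd \<Phi>))) \<Phi> (last (dms \<Phi>))"
    by (rule wfn_of_conds) (use n ne a in \<open>auto simp: is_net_def\<close>)
  then show ?thesis using a ne by (simp add: dms_def)
qed

fun ncomp :: "net \<Rightarrow> net \<Rightarrow> net" where
  "ncomp [] \<Psi> = \<Psi>"
| "ncomp [(W,B)] \<Psi> = (case \<Psi> of [] \<Rightarrow> [(W,B)] | (W2,B2)#R \<Rightarrow> (W2 * W, W2 *\<^sub>v B + B2) # R)"
| "ncomp ((W,B)#l#L) \<Psi> = (W,B) # ncomp (l#L) \<Psi>"

lemma ncomp_props:
  assumes "wfn a \<Phi> k" "wfn k \<Psi> b"
  shows "wfn a (ncomp \<Phi> \<Psi>) b \<and> length (ncomp \<Phi> \<Psi>) = length \<Phi> + length \<Psi> - 1 \<and>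
    set (dms (ncomp \<Phi> \<Psi>)) \<subseteq> set (dms \<Phi>) \<union> set (dms \<Psi>) \<and>
    (\<forall>x. dim_vec x = a \<longrightarrow> realize (ncomp \<Phi> \<Psi>) x = realize \<Psi> (realize \<Phi> x))"
  using assms
proof (induction \<Phi> \<Psi> arbitrary: a rule: ncomp.induct)
  case (2 W B \<Psi>)
  obtain W2 B2 R where P: "\<Psi> = (W2,B2)#R" using "2.prems"(2) by (cases \<Psi>) auto
  have W: "W \<in> carrier_mat k a" "dim_vec B = k" "1 \<le> a" using "2.prems"(1) by auto
  show ?case
  proof (cases R)
    case Nil
    then have W2: "W2 \<in> carrier_mat b k" "dim_vec B2 = b" "1 \<le> b" using "2.prems"(2) P by auto
    show ?thesis using W W2 P Nil
      by (auto simp: mult_add_distrib_mat_vec[of W2 b k] assoc_add_vec[of _ b])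
  next
    case (Cons l L)
    then have W2: "W2 \<in> carrier_mat (dim_vec B2) k" "wfn (dim_vec B2) (l#L) b" "1 \<le> dim_vec B2"
      using "2.prems"(2) P by auto
    show ?thesis using W W2 P Cons
      by (auto simp: mult_add_distrib_mat_vec[of W2 "dim_vec B2" k] assoc_add_vec[of _ "dim_vec B2"])
  qed
next
  case (3 W B l L \<Psi>)
  have W: "W \<in> carrier_mat (dim_vec B) a" "wfn (dim_vec B) (l#L) k" "1 \<le> a" "1 \<le> dim_vec B"
    using "3.prems"(1) by auto
  note IH = "3.IH"[OF W(2) "3.prems"(2)]
  obtain l' L' where LL: "ncomp (l#L) \<Psi> = l' # L'" using IH by (cases "ncomp (l#L) \<Psi>") auto
  have "wfn a (ncomp ((W,B)#l#L) \<Psi>) b" using IH W LL by (cases l') auto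
  moreover have "length (ncomp ((W,B)#l#L) \<Psi>) = length ((W,B)#l#L) + length \<Psi> - 1"
    using IH "3.prems"(2) by (cases \<Psi>) auto
  moreover have "set (dms (ncomp ((W,B)#l#L) \<Psi>)) \<subseteq> set (dms ((W,B)#l#L)) \<union> set (dms \<Psi>)"
    using IH by auto
  moreover have "\<forall>x. dim_vec x = a \<longrightarrow> realize (ncomp ((W,B)#l#L) \<Psi>) x = realize \<Psi> (realize ((W,B)#l#L) x)"
    using IH W LL by (auto simp: relu_def)
  ultimately show ?case by blast
qed auto

definition rep :: "nat \<Rightarrow> nat \<Rightarrow> nat \<Rightarrow> real \<Rightarrow> (real vec \<Rightarrow> real vec) \<Rightarrow> bool" where
  "rep a b L w h \<longleftrightarrow> (\<exists>\<Phi>. wfn a \<Phi> b \<and> length \<Phi> + 1 = L \<and> real (Max (set (a # dms \<Phi>))) \<le> w \<and>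
      (\<forall>x. dim_vec x = a \<longrightarrow> realize \<Phi> x = h x))"

lemma rep_mono: "rep a b L w h \<Longrightarrow> w \<le> w' \<Longrightarrow> rep a b L w' h"
  unfolding rep_def by force

lemma rep_cong: "rep a b L w h \<Longrightarrow> (\<And>x. dim_vec x = a \<Longrightarrow> h x = h' x) \<Longrightarrow> rep a b L w h'"
  unfolding rep_def by force

lemma rep_props: assumes "rep a b L w h"
  shows "1 \<le> a \<and> 1 \<le> b \<and> real a \<le> w \<and> real b \<le> w \<and> 2 \<le> L \<and> (\<forall>x. dim_vec x = a \<longrightarrow> dim_vec (h x) = b)"
proof -
  obtain \<Phi> where P: "wfn a \<Phi> b" "length \<Phi> + 1 = L" "real (Max (set (a # dms \<Phi>))) \<le> w"
      "\<forall>x. dim_vec x = a \<longrightarrow> realize \<Phi> x = h x"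
    using assms unfolding rep_def by blast
  have ne: "\<Phi> \<noteq> []" using P(1) by (cases \<Phi>) auto
  have b: "b \<in> set (a # dms \<Phi>)" using wfn_last[OF P(1)] ne
    by (metis dms_def last_in_set list.map_disc_iff list.set_intros(2))
  have "a \<le> Max (set (a # dms \<Phi>))" "b \<le> Max (set (a # dms \<Phi>))" using b by auto
  then show ?thesis using P wfn_b[OF P(1)] ne realize_dim[OF P(1)]
    by (cases \<Phi>) auto
qed

lemma rep_comp: assumes "rep a k L1 w1 h1" "rep k b L2 w2 h2"
  shows "rep a b (L1 + L2 - 2) (max w1 w2) (\<lambda>x. h2 (h1 x))"
proof -
  obtain \<Phi> where P: "wfn a \<Phi> k" "length \<Phi> + 1 = L1" "real (Max (set (a # dms \<Phi>))) \<le> w1"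
      "\<forall>x. dim_vec x = a \<longrightarrow> realize \<Phi> x = h1 x"
    using assms(1) unfolding rep_def by blast
  obtain \<Psi> where Q: "wfn k \<Psi> b" "length \<Psi> + 1 = L2" "real (Max (set (k # dms \<Psi>))) \<le> w2"
      "\<forall>x. dim_vec x = k \<longrightarrow> realize \<Psi> x = h2 x"
    using assms(2) unfolding rep_def by blast
  note C = ncomp_props[OF P(1) Q(1)]
  have ne: "\<Phi> \<noteq> []" "\<Psi> \<noteq> []" using P(1) Q(1) by (cases \<Phi>; auto; cases \<Psi>; auto)+
  have k: "k \<in> set (a # dms \<Phi>)" using wfn_last[OF P(1)] ne
    by (metis dms_def last_in_set list.map_disc_iff list.set_intros(2))
  have "Max (set (a # dms (ncomp \<Phi> \<Psi>))) \<le> max (Max (set (a # dms \<Phi>))) (Max (set (k # dms \<Psi>)))"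
    using C by (subst Max_le_iff) (auto simp: le_max_iff_disj)
  then have "real (Max (set (a # dms (ncomp \<Phi> \<Psi>)))) \<le> max w1 w2"
    using P(3) Q(3) by (smt (verit) max.cobounded1 max_def of_nat_max of_nat_mono)
  moreover have "\<forall>x. dim_vec x = a \<longrightarrow> realize (ncomp \<Phi> \<Psi>) x = h2 (h1 x)"
    using C P(4) Q(4) realize_dim[OF P(1)] by auto
  moreover have "length \<Phi> \<ge> 1" "length \<Psi> \<ge> 1" using ne by (auto simp: Suc_le_eq)
  ultimately show ?thesis unfolding rep_def using C P(2) Q(2)
    by (intro exI[of _ "ncomp \<Phi> \<Psi>"]) auto
qed

lemma rep_affine: assumes "A \<in> carrier_mat b a" "dim_vec c = b" "1 \<le> a" "1 \<le> b"
  shows "rep a b 2 (max a b) (\<lambda>x. A *\<^sub>v x + c)"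
  unfolding rep_def using assms by (intro exI[of _ "[(A,c)]"]) auto

lemma sum_delta1: "(i::nat) < n \<Longrightarrow> (\<Sum>l\<in>{0..<n}. (if l = i then a else 0) * (f l::real)) = a * f i"
proof -
  assume "i < n"
  have "(\<Sum>l\<in>{0..<n}. (if l = i then a else 0) * f l) = (\<Sum>l\<in>{0..<n}. if l = i then a * f l else 0)"
    by (rule sum.cong) auto
  also have "\<dots> = a * f i" using \<open>i < n\<close> by (subst sum.delta) auto
  finally show ?thesis .
qed

lemma sum_delta2: "(i::nat) < n \<Longrightarrow> j < n \<Longrightarrow> i \<noteq> j \<Longrightarrow>
  (\<Sum>l\<in>{0..<n}. (if l = i then a else if l = j then b else 0) * (f l::real)) = a * f i + b * f j"
proof -
  assume h: "i < n" "j < n" "i \<noteq> j"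
  have "(\<Sum>l\<in>{0..<n}. (if l = i then a else if l = j then b else 0) * f l)
      = (\<Sum>l\<in>{0..<n}. (if l = i then a else 0) * f l + (if l = j then b else 0) * f l)"
    by (rule sum.cong) (use h in auto)
  also have "\<dots> = a * f i + b * f j" using h by (simp add: sum.distrib sum_delta1)
  finally show ?thesis .
qed

definition Ipm :: "nat \<Rightarrow> real mat" where
  "Ipm k = mat (2*k) k (\<lambda>(i,j). if i < k then (if j = i then 1 else 0) else (if j = i - k then -1 else 0))"
definition Mid :: "nat \<Rightarrow> real mat" where
  "Mid k = mat (2*k) (2*k) (\<lambda>(i,j). if i < k then (if j = i then 1 else if j = i + k then -1 else 0)
      else (if j = i then 1 else if j = i - k then -1 else 0))"
definition Ipl :: "nat \<Rightarrow> real mat" where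
  "Ipl k = mat k (2*k) (\<lambda>(i,j). if j = i then 1 else if j = i + k then -1 else 0)"
definition st :: "nat \<Rightarrow> real vec \<Rightarrow> real vec" where
  "st k x = vec (2*k) (\<lambda>i. if i < k then max 0 (x$i) else max 0 (-(x$(i-k))))"

lemma Ipm_st: "dim_vec x = k \<Longrightarrow> relu (Ipm k *\<^sub>v x + 0\<^sub>v (2*k)) = st k x"
  by (rule eq_vecI) (auto simp: relu_def st_def Ipm_def scalar_prod_def sum_delta1)

lemma Mid_st: "dim_vec x = k \<Longrightarrow> relu (Mid k *\<^sub>v st k x + 0\<^sub>v (2*k)) = st k x"
proof (rule eq_vecI)
  fix i assume x: "dim_vec x = k" and i: "i < dim_vec (st k x)"
  then have i2: "i < 2*k" by (simp add: st_def)
  show "relu (Mid k *\<^sub>v st k x + 0\<^sub>v (2*k)) $ i = st k x $ i"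
  proof (cases "i < k")
    case True
    then have "(Mid k *\<^sub>v st k x) $ i = st k x $ i - st k x $ (i+k)"
      using i2 x by (simp add: Mid_def scalar_prod_def sum_delta2 st_def)
    then show ?thesis using True i2 by (simp add: relu_def st_def max_def)
  next
    case False
    then have "(Mid k *\<^sub>v st k x) $ i = st k x $ i - st k x $ (i-k)"
      using i2 x by (simp add: Mid_def scalar_prod_def sum_delta2 st_def)
    then show ?thesis using False i2 by (simp add: relu_def st_def max_def)
  qed
qed (simp add: relu_def st_def Mid_def)

lemma Ipl_st: "dim_vec x = k \<Longrightarrow> Ipl k *\<^sub>v st k x + 0\<^sub>v k = x"
proof (rule eq_vecI)
  fix i assume x: "dim_vec x = k" and i: "i < dim_vec x"
  have "(Ipl k *\<^sub>v st k x) $ i = st k x $ i - st k x $ (i+k)"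
    using i x by (simp add: Ipl_def scalar_prod_def sum_delta2 st_def)
  then show "(Ipl k *\<^sub>v st k x + 0\<^sub>v k) $ i = x $ i" using i x by (simp add: st_def)
qed (simp add: Ipl_def)

fun idtail :: "nat \<Rightarrow> nat \<Rightarrow> net" where
  "idtail k 0 = [(Ipl k, 0\<^sub>v k)]"
| "idtail k (Suc n) = (Mid k, 0\<^sub>v (2*k)) # idtail k n"

lemma idtail_props: assumes "1 \<le> k"
  shows "wfn (2*k) (idtail k n) k \<and> length (idtail k n) = n + 1 \<and> set (dms (idtail k n)) \<subseteq> {2*k, k} \<and>
    (\<forall>x. dim_vec x = k \<longrightarrow> realize (idtail k n) (st k x) = x)"
proof (induction n)
  case 0
  then show ?case using assms Ipl_st by (auto simp: Ipl_def)
next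
  case (Suc n)
  obtain l L where lL: "idtail k n = l # L" by (cases n) auto
  show ?case using Suc lL assms Mid_st by (cases l) (auto simp: Mid_def)
qed

lemma rep_id: assumes "1 \<le> k" "3 \<le> L" shows "rep k k L (2*k) (\<lambda>x. x)"
proof -
  note I = idtail_props[OF assms(1), of "L - 3"]
  obtain l R where lR: "idtail k (L-3) = l # R" by (cases "L - 3") auto
  define \<Phi> where "\<Phi> = (Ipm k, 0\<^sub>v (2*k)) # idtail k (L-3)"
  have w: "wfn k \<Phi> k" using I lR assms unfolding \<Phi>_def by (cases l) (auto simp: Ipm_def)
  have "set (k # dms \<Phi>) \<subseteq> {2*k, k}" using I by (auto simp: \<Phi>_def)
  then have "Max (set (k # dms \<Phi>)) \<le> 2*k" by (subst Max_le_iff) auto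
  then have "real (Max (set (k # dms \<Phi>))) \<le> 2 * real k"
    by (metis of_nat_le_iff of_nat_mult of_nat_numeral)
  moreover have "length \<Phi> + 1 = L" using I assms by (simp add: \<Phi>_def)
  moreover have "\<forall>x. dim_vec x = k \<longrightarrow> realize \<Phi> x = x"
    using I lR Ipm_st unfolding \<Phi>_def by (cases l) auto
  ultimately show ?thesis unfolding rep_def using w
    by (intro exI[of _ \<Phi>]) auto
qed

lemma rep_pad_back: assumes "rep a b L w h" "L \<le> L'"
  shows "rep a b L' (max w (2*b)) h"
proof (cases "L = L'")
  case True then show ?thesis using assms rep_mono by auto
next
  case False
  have b: "1 \<le> b" "2 \<le> L" using rep_props[OF assms(1)] by auto
  have "rep b b (L' - L + 2) (2*b) (\<lambda>x. x)" by (rule rep_id) (use b False assms in auto)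
  from rep_comp[OF assms(1) this] show ?thesis using b assms by (simp add: algebra_simps)
qed

lemma rep_pad_front: assumes "rep a b L w h" "L \<le> L'"
  shows "rep a b L' (max w (2*a)) h"
proof (cases "L = L'")
  case True then show ?thesis using assms rep_mono by auto
next
  case False
  have b: "1 \<le> a" "2 \<le> L" using rep_props[OF assms(1)] by auto
  have "rep a a (L' - L + 2) (2*a) (\<lambda>x. x)" by (rule rep_id) (use b False assms in auto)
  from rep_comp[OF this assms(1)] show ?thesis using b assms by (simp add: algebra_simps max.commute)
qed

definition stk :: "real mat \<Rightarrow> real mat \<Rightarrow> real mat" where
  "stk W1 W2 = mat (dim_row W1 + dim_row W2) (dim_col W1)
     (\<lambda>(i,j). if i < dim_row W1 then W1 $$ (i,j) else W2 $$ (i - dim_row W1, j))"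

definition bd :: "real mat \<Rightarrow> real mat \<Rightarrow> real mat" where
  "bd W1 W2 = four_block_mat W1 (0\<^sub>m (dim_row W1) (dim_col W2)) (0\<^sub>m (dim_row W2) (dim_col W1)) W2"

lemma zero_mat_mult_vec: "dim_vec v = c \<Longrightarrow> 0\<^sub>m r c *\<^sub>v v = (0\<^sub>v r :: real vec)"
  by (rule eq_vecI) (auto simp: scalar_prod_def)

lemma stk_mult: "W1 \<in> carrier_mat r1 c \<Longrightarrow> W2 \<in> carrier_mat r2 c \<Longrightarrow> dim_vec x = c \<Longrightarrow>
   stk W1 W2 *\<^sub>v x = (W1 *\<^sub>v x) @\<^sub>v (W2 *\<^sub>v x)"
  by (rule eq_vecI) (auto simp: stk_def scalar_prod_def)

lemma bd_mult: "W1 \<in> carrier_mat r1 c1 \<Longrightarrow> W2 \<in> carrier_mat r2 c2 \<Longrightarrow> dim_vec u = c1 \<Longrightarrow> dim_vec v = c2 \<Longrightarrow>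
   bd W1 W2 *\<^sub>v (u @\<^sub>v v) = (W1 *\<^sub>v u) @\<^sub>v (W2 *\<^sub>v v)"
  unfolding bd_def
  by (subst four_block_mat_mult_vec[of W1 r1 c1 _ c2 _ r2 W2]) (auto simp: zero_mat_mult_vec)

lemma bd_carrier: "W1 \<in> carrier_mat r1 c1 \<Longrightarrow> W2 \<in> carrier_mat r2 c2 \<Longrightarrow> bd W1 W2 \<in> carrier_mat (r1+r2) (c1+c2)"
  unfolding bd_def by (rule four_block_carrier_mat) auto

lemma dim_relu[simp]: "dim_vec (relu v) = dim_vec v" by (simp add: relu_def)

lemma relu_append: "relu (u @\<^sub>v v) = relu u @\<^sub>v relu v"
  by (rule eq_vecI) (auto simp: relu_def)

lemma append_add: "dim_vec u = dim_vec u' \<Longrightarrow> dim_vec v = dim_vec v' \<Longrightarrow>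
  (u @\<^sub>v v) + (u' @\<^sub>v v') = (u + u') @\<^sub>v (v + v')"
  by (rule eq_vecI) auto

fun bdl :: "net \<Rightarrow> net \<Rightarrow> net" where
  "bdl ((W1,B1)#L1) ((W2,B2)#L2) = (bd W1 W2, B1 @\<^sub>v B2) # bdl L1 L2"
| "bdl _ _ = []"

lemma bdl_props: "length \<Psi>1 = length \<Psi>2 \<Longrightarrow> wfn k1 \<Psi>1 p1 \<Longrightarrow> wfn k2 \<Psi>2 p2 \<Longrightarrow>
   wfn (k1+k2) (bdl \<Psi>1 \<Psi>2) (p1+p2) \<and> length (bdl \<Psi>1 \<Psi>2) = length \<Psi>1 \<and>
   dms (bdl \<Psi>1 \<Psi>2) = map2 (+) (dms \<Psi>1) (dms \<Psi>2) \<and>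
   (\<forall>u v. dim_vec u = k1 \<longrightarrow> dim_vec v = k2 \<longrightarrow> realize (bdl \<Psi>1 \<Psi>2) (u @\<^sub>v v) = realize \<Psi>1 u @\<^sub>v realize \<Psi>2 v)"
proof (induction \<Psi>1 \<Psi>2 arbitrary: k1 k2 rule: list_induct2)
  case Nil
  then show ?case by simp
next
  case (Cons x xs y ys)
  obtain W1 B1 where x: "x = (W1,B1)" by (cases x)
  obtain W2 B2 where y: "y = (W2,B2)" by (cases y)
  show ?case
  proof (cases xs)
    case Nil
    then have ys: "ys = []" using Cons by simp
    have W: "W1 \<in> carrier_mat p1 k1" "W2 \<in> carrier_mat p2 k2" "dim_vec B1 = p1" "dim_vec B2 = p2"
       "1 \<le> k1" "1 \<le> k2" "1 \<le> p1" "1 \<le> p2"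
      using Cons.prems x y Nil ys by auto
    show ?thesis using W x y Nil ys
      by (auto simp: bd_carrier bd_mult append_add)
  next
    case (Cons l L)
    obtain l' L' where ys: "ys = l' # L'" using Cons \<open>length xs = length ys\<close> by (cases ys) auto
    have W: "W1 \<in> carrier_mat (dim_vec B1) k1" "W2 \<in> carrier_mat (dim_vec B2) k2"
       "1 \<le> k1" "1 \<le> k2" "1 \<le> dim_vec B1" "1 \<le> dim_vec B2"
       "wfn (dim_vec B1) xs p1" "wfn (dim_vec B2) ys p2"
      using Cons.prems x y Cons ys by auto
    note IH = "Cons.IH"[OF W(7,8)]
    obtain m M where mM: "bdl xs ys = m # M" using IH Cons by (cases "bdl xs ys") auto
    have "realize (bdl (x#xs) (y#ys)) (u @\<^sub>v v) = realize (x#xs) u @\<^sub>v realize (y#ys) v"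
      if "dim_vec u = k1" "dim_vec v = k2" for u v
      using W x y IH mM that Cons ys by (cases m) (auto simp: bd_mult append_add relu_append)
    then show ?thesis using W x y IH mM
      by (cases m) (auto simp: bd_carrier bd_mult append_add relu_append)
  qed
qed

definition par :: "net \<Rightarrow> net \<Rightarrow> net" where
  "par \<Phi>1 \<Phi>2 = (case \<Phi>1 of (W1,B1)#L1 \<Rightarrow> (case \<Phi>2 of (W2,B2)#L2 \<Rightarrow> (stk W1 W2, B1 @\<^sub>v B2) # bdl L1 L2))"

lemma max_real_le: "(\<And>k. k \<in> set (a # l) \<Longrightarrow> real k \<le> w) \<Longrightarrow> real (Max (set (a # l))) \<le> w"
  by (metis List.finite_set Max_in empty_iff list.set_intros(1))

lemma le_max_real: "k \<in> set (a # l) \<Longrightarrow> real k \<le> real (Max (set (a # l)))"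
  by simp

lemma rep_par: assumes "rep a p1 L w1 h1" "rep a p2 L w2 h2"
  shows "rep a (p1+p2) L (w1+w2) (\<lambda>x. h1 x @\<^sub>v h2 x)"
proof -
  obtain \<Phi>1 where P: "wfn a \<Phi>1 p1" "length \<Phi>1 + 1 = L" "real (Max (set (a # dms \<Phi>1))) \<le> w1"
      "\<forall>x. dim_vec x = a \<longrightarrow> realize \<Phi>1 x = h1 x"
    using assms(1) unfolding rep_def by blast
  obtain \<Phi>2 where Q: "wfn a \<Phi>2 p2" "length \<Phi>2 + 1 = L" "real (Max (set (a # dms \<Phi>2))) \<le> w2"
      "\<forall>x. dim_vec x = a \<longrightarrow> realize \<Phi>2 x = h2 x"
    using assms(2) unfolding rep_def by blast
  obtain W1 B1 L1 where P1: "\<Phi>1 = (W1,B1)#L1" using P(1) by (cases \<Phi>1) auto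
  obtain W2 B2 L2 where Q1: "\<Phi>2 = (W2,B2)#L2" using Q(1) by (cases \<Phi>2) auto
  have len: "length L1 = length L2" using P(2) Q(2) P1 Q1 by simp
  have w1: "0 \<le> w1" "0 \<le> w2" using P(3) Q(3) by (auto intro: order_trans[OF of_nat_0_le_iff])
  have M1: "\<And>k. k \<in> set (a # dms \<Phi>1) \<Longrightarrow> real k \<le> w1" using P(3) le_max_real order_trans by blast
  have M2: "\<And>k. k \<in> set (a # dms \<Phi>2) \<Longrightarrow> real k \<le> w2" using Q(3) le_max_real order_trans by blast
  show ?thesis
  proof (cases L1)
    case Nil
    then have L2: "L2 = []" using len by simp
    have W: "W1 \<in> carrier_mat p1 a" "W2 \<in> carrier_mat p2 a" "dim_vec B1 = p1" "dim_vec B2 = p2" "1 \<le> a"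
      "1 \<le> p1" "1 \<le> p2"
      using P(1) Q(1) P1 Q1 Nil L2 by auto
    define \<Psi> where "\<Psi> = [(stk W1 W2, B1 @\<^sub>v B2)]"
    have "wfn a \<Psi> (p1+p2)" using W by (auto simp: \<Psi>_def stk_def)
    moreover have "length \<Psi> + 1 = L" using P(2) P1 Nil by (simp add: \<Psi>_def)
    moreover have "real (Max (set (a # dms \<Psi>))) \<le> w1 + w2"
      using M1[of a] M2[of p2] M1[of p1] w1 W P1 Q1 by (intro max_real_le) (auto simp: \<Psi>_def)
    moreover have "\<forall>x. dim_vec x = a \<longrightarrow> realize \<Psi> x = h1 x @\<^sub>v h2 x"
      using W P(4) Q(4) P1 Q1 Nil L2 by (auto simp: \<Psi>_def stk_mult append_add)
    ultimately show ?thesis unfolding rep_def by blast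
  next
    case (Cons l R)
    obtain l' R' where L2: "L2 = l' # R'" using len Cons by (cases L2) auto
    have W: "W1 \<in> carrier_mat (dim_vec B1) a" "W2 \<in> carrier_mat (dim_vec B2) a" "1 \<le> a"
      "1 \<le> dim_vec B1" "1 \<le> dim_vec B2" "wfn (dim_vec B1) L1 p1" "wfn (dim_vec B2) L2 p2"
      using P(1) Q(1) P1 Q1 Cons L2 by auto
    note B = bdl_props[OF len W(6,7)]
    obtain m M where mM: "bdl L1 L2 = m # M" using B Cons by (cases "bdl L1 L2") auto
    define \<Psi> where "\<Psi> = (stk W1 W2, B1 @\<^sub>v B2) # bdl L1 L2"
    have "wfn a \<Psi> (p1+p2)" using W B mM by (cases m) (auto simp: \<Psi>_def stk_def)
    moreover have "length \<Psi> + 1 = L" using P(2) P1 B by (simp add: \<Psi>_def)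
    moreover have "real (Max (set (a # dms \<Psi>))) \<le> w1 + w2"
    proof (intro max_real_le)
      fix k assume k: "k \<in> set (a # dms \<Psi>)"
      show "real k \<le> w1 + w2"
      proof -
        { assume "k = a" then have ?thesis using M1[of a] w1 by auto }
        moreover
        { assume "k = dim_vec B1 + dim_vec B2" then have ?thesis using M1[of "dim_vec B1"] M2[of "dim_vec B2"] P1 Q1 by auto }
        moreover
        { assume "k \<in> set (map2 (+) (dms L1) (dms L2))"
          then obtain x y where "(x,y) \<in> set (zip (dms L1) (dms L2))" "k = x + y" by auto
          then have "x \<in> set (dms L1)" "y \<in> set (dms L2)" "k = x + y"
            by (auto dest: set_zip_leftD set_zip_rightD)
          then have ?thesis using M1[of x] M2[of y] P1 Q1 by auto }
        ultimately show ?thesis using k B by (auto simp: \<Psi>_def)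
      qed
    qed
    moreover have "\<forall>x. dim_vec x = a \<longrightarrow> realize \<Psi> x = h1 x @\<^sub>v h2 x"
    proof (intro allI impI)
      fix x :: "real vec" assume x: "dim_vec x = a"
      have "realize \<Psi> x = realize (bdl L1 L2) (relu (stk W1 W2 *\<^sub>v x + (B1 @\<^sub>v B2)))"
        using mM by (simp add: \<Psi>_def)
      also have "\<dots> = realize (bdl L1 L2) (relu (W1 *\<^sub>v x + B1) @\<^sub>v relu (W2 *\<^sub>v x + B2))"
        using W x by (simp add: stk_mult append_add relu_append)
      also have "\<dots> = realize L1 (relu (W1 *\<^sub>v x + B1)) @\<^sub>v realize L2 (relu (W2 *\<^sub>v x + B2))"
        using B W by simp
      also have "\<dots> = h1 x @\<^sub>v h2 x" using P(4) Q(4) x P1 Q1 Cons L2 by auto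
      finally show "realize \<Psi> x = h1 x @\<^sub>v h2 x" .
    qed
    ultimately show ?thesis unfolding rep_def by blast
  qed
qed

lemma rep_post_affine: assumes "rep a b L w h" "A \<in> carrier_mat p b" "dim_vec c = p" "1 \<le> p"
  shows "rep a p L (max w (real p)) (\<lambda>x. A *\<^sub>v h x + c)"
proof -
  have b: "1 \<le> b" "real b \<le> w" "2 \<le> L" using rep_props[OF assms(1)] by auto
  have "rep b p 2 (max b p) (\<lambda>x. A *\<^sub>v x + c)" by (rule rep_affine) (use assms b in auto)
  from rep_comp[OF assms(1) this] have "rep a p L (max w (real (max b p))) (\<lambda>x. A *\<^sub>v h x + c)"
    using b by simp
  then show ?thesis by (rule rep_mono) (use b in auto)
qed

definition S2 :: "nat \<Rightarrow> real \<Rightarrow> real \<Rightarrow> real mat" where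
  "S2 p c1 c2 = mat p (2*p) (\<lambda>(i,j). if j = i then c1 else if j = i + p then c2 else 0)"

lemma S2_mult: "dim_vec u = p \<Longrightarrow> dim_vec v = p \<Longrightarrow> S2 p c1 c2 *\<^sub>v (u @\<^sub>v v) + 0\<^sub>v p = c1 \<cdot>\<^sub>v u + c2 \<cdot>\<^sub>v v"
proof (rule eq_vecI)
  fix i assume h: "dim_vec u = p" "dim_vec v = p" and i: "i < dim_vec (c1 \<cdot>\<^sub>v u + c2 \<cdot>\<^sub>v v)"
  then have i': "i < p" by simp
  have "(S2 p c1 c2 *\<^sub>v (u @\<^sub>v v)) $ i = c1 * (u @\<^sub>v v) $ i + c2 * (u @\<^sub>v v) $ (i + p)"
    using h i' by (simp add: S2_def scalar_prod_def sum_delta2)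
  then show "(S2 p c1 c2 *\<^sub>v (u @\<^sub>v v) + 0\<^sub>v p) $ i = (c1 \<cdot>\<^sub>v u + c2 \<cdot>\<^sub>v v) $ i"
    using h i' by simp
qed (simp add: S2_def)

lemma rep_lin2: assumes "rep a p L w1 h1" "rep a p L w2 h2"
  shows "rep a p L (w1 + w2) (\<lambda>x. c1 \<cdot>\<^sub>v h1 x + c2 \<cdot>\<^sub>v h2 x)"
proof -
  have p: "1 \<le> p" "real p \<le> w1" "real p \<le> w2" "\<forall>x. dim_vec x = a \<longrightarrow> dim_vec (h1 x) = p"
    "\<forall>x. dim_vec x = a \<longrightarrow> dim_vec (h2 x) = p"
    using rep_props[OF assms(1)] rep_props[OF assms(2)] by auto
  have "rep a p L (max (w1+w2) (real p)) (\<lambda>x. S2 p c1 c2 *\<^sub>v (h1 x @\<^sub>v h2 x) + 0\<^sub>v p)"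
    by (rule rep_post_affine[OF rep_par[OF assms]]) (use p in \<open>auto simp: S2_def\<close>)
  then have "rep a p L (w1+w2) (\<lambda>x. S2 p c1 c2 *\<^sub>v (h1 x @\<^sub>v h2 x) + 0\<^sub>v p)"
    by (rule rep_mono) (use p in auto)
  then show ?thesis by (rule rep_cong) (use p S2_mult in auto)
qed

lemma rep_const: assumes "1 \<le> a" "2 \<le> L" shows "rep a 1 L (max a 2) (\<lambda>_. vec 1 (\<lambda>_. b))"
proof -
  have "rep a 1 2 (max a 1) (\<lambda>x. 0\<^sub>m 1 a *\<^sub>v x + vec 1 (\<lambda>_. b))" by (rule rep_affine) (use assms in auto)
  from rep_pad_back[OF this assms(2)] have "rep a 1 L (max a 2) (\<lambda>x. 0\<^sub>m 1 a *\<^sub>v x + vec 1 (\<lambda>_. b))"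
    by (rule rep_mono) (use assms in \<open>auto simp: max_def\<close>)
  then show ?thesis by (rule rep_cong) (auto simp: zero_mat_mult_vec)
qed

abbreviation sc :: "real \<Rightarrow> real vec" where "sc y \<equiv> vec 1 (\<lambda>_. y)"

lemma rep_scal: assumes "rep a 1 L w (\<lambda>x. sc (u x))"
  shows "rep a 1 L w (\<lambda>x. sc (\<alpha> * u x + \<beta>))"
proof -
  have w: "1 \<le> w" using rep_props[OF assms] by auto
  have "rep a 1 L (max w (real 1)) (\<lambda>x. mat 1 1 (\<lambda>_. \<alpha>) *\<^sub>v sc (u x) + sc \<beta>)"
    by (rule rep_post_affine[OF assms]) auto
  then have "rep a 1 L w (\<lambda>x. mat 1 1 (\<lambda>_. \<alpha>) *\<^sub>v sc (u x) + sc \<beta>)" using w by (simp add: max_def)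
  then show ?thesis by (rule rep_cong) (auto simp: scalar_prod_def)
qed

lemma rep_add2: assumes "rep a 1 L w1 (\<lambda>x. sc (u1 x))" "rep a 1 L w2 (\<lambda>x. sc (u2 x))"
  shows "rep a 1 L (w1 + w2) (\<lambda>x. sc (c1 * u1 x + c2 * u2 x))"
  using rep_lin2[OF assms, of c1 c2] by (rule rep_cong) auto

lemma rep_sum: assumes "finite I" "I \<noteq> {}" "\<And>i. i \<in> I \<Longrightarrow> rep a 1 L (w i) (\<lambda>x. sc (u i x))"
  shows "rep a 1 L (\<Sum>i\<in>I. w i) (\<lambda>x. sc (\<Sum>i\<in>I. u i x))"
  using assms
proof (induction I rule: finite_ne_induct)
  case (singleton i)
  then show ?case by simp
next
  case (insert i F)
  have "rep a 1 L (w i + (\<Sum>i\<in>F. w i)) (\<lambda>x. sc (1 * u i x + 1 * (\<Sum>i\<in>F. u i x)))"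
    by (rule rep_add2) (use insert in auto)
  then show ?case using insert by simp
qed

section \<open>Time grid\<close>

definition gcnt :: "real \<Rightarrow> nat \<Rightarrow> real \<Rightarrow> nat" where
  "gcnt T K s = card {j. j \<le> K \<and> T * real j / real K < s}"

lemma flrK_set_finite: "finite ({0} \<union> {T * real j / real K | j. j \<le> K \<and> T * real j / real K < s})"
proof -
  have "{T * real j / real K | j. j \<le> K \<and> T * real j / real K < s} \<subseteq> (\<lambda>j. T * real j / real K) ` {..K}"
    by auto
  then show ?thesis by (meson finite_UnI finite_atMost finite_imageI finite_insert finite.emptyI finite_subset)
qed

lemma flrK_cases: "flrK T K s = 0 \<or> (\<exists>j. j \<le> K \<and> flrK T K s = T * real j / real K \<and> T * real j / real K < s)"
proof -
  have "flrK T K s \<in> ({0} \<union> {T * real j / real K | j. j \<le> K \<and> T * real j / real K < s})"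
    unfolding flrK_def by (rule Max_in[OF flrK_set_finite]) auto
  then show ?thesis by auto
qed

lemma flrK_nonneg: "0 \<le> flrK T K s"
  unfolding flrK_def by (rule Max_ge[OF flrK_set_finite]) auto

lemma gcnt_le: assumes "0 < T" "1 \<le> K" "s \<le> T" shows "gcnt T K s \<le> K"
proof -
  have "{j. j \<le> K \<and> T * real j / real K < s} \<subseteq> {..<K}"
  proof
    fix j assume j: "j \<in> {j. j \<le> K \<and> T * real j / real K < s}"
    have "j \<noteq> K" using j assms by auto
    then show "j \<in> {..<K}" using j by auto
  qed
  then show ?thesis unfolding gcnt_def by (metis card_lessThan card_mono finite_lessThan)
qed

lemma gcnt_ge: assumes "0 < s" "1 \<le> K" shows "1 \<le> gcnt T K s"
proof -
  have fin: "finite {j. j \<le> K \<and> T * real j / real K < s}" by simp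
  have "0 \<in> {j. j \<le> K \<and> T * real j / real K < s}" using assms by auto
  then show ?thesis unfolding gcnt_def using fin by (metis One_nat_def Suc_leI card_gt_0_iff empty_iff)
qed

lemma gcnt_less: assumes "j \<le> K" "T * real j / real K < s"
  shows "gcnt T K (T * real j / real K) < gcnt T K s"
proof -
  have "{i. i \<le> K \<and> T * real i / real K < T * real j / real K} \<subset> {i. i \<le> K \<and> T * real i / real K < s}"
    using assms by auto
  then show ?thesis unfolding gcnt_def by (rule psubset_card_mono[rotated]) simp
qed

section \<open>Euler scheme as a network\<close>

lemma euler_rep:
  fixes X :: "real \<Rightarrow> real vec \<Rightarrow> real \<Rightarrow> real vec" and stp :: "real \<Rightarrow> real \<Rightarrow> real vec \<Rightarrow> real vec"
  assumes T: "0 < T" and K: "1 \<le> K" and M: "3 \<le> M" and d: "1 \<le> d" and PX: "2 * real d \<le> PX"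
    and step_rep: "\<And>s a. rep d d M PX (stp s a)"
    and X_init: "\<And>x. dim_vec x = d \<Longrightarrow> X t x t = x"
    and X_step: "\<And>x s. dim_vec x = d \<Longrightarrow> s \<in> {t<..T} \<Longrightarrow>
        X t x s = stp s (max t (flrK T K s)) (X t x (max t (flrK T K s)))"
    and t: "t \<in> {0..T}" and s: "s \<in> {t..T}"
  shows "rep d d (K * (M - 1) + 1) PX (\<lambda>x. X t x s)"
proof -
  have main: "\<forall>s. s \<in> {t<..T} \<longrightarrow> gcnt T K s \<le> N \<longrightarrow>
      (\<exists>j. 1 \<le> j \<and> j \<le> gcnt T K s \<and> rep d d (j * (M - 2) + 2) PX (\<lambda>x. X t x s))" for N
  proof (induction N)
    case 0
    show ?case using gcnt_ge[OF _ K] t by (auto simp: Suc_le_eq)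
  next
    case (Suc N)
    show ?case
    proof (intro allI impI)
      fix s assume s: "s \<in> {t<..T}" and c: "gcnt T K s \<le> Suc N"
      define a where "a = max t (flrK T K s)"
      have Xs: "\<And>x. dim_vec x = d \<Longrightarrow> X t x s = stp s a (X t x a)" using X_step s unfolding a_def by auto
      have cs: "1 \<le> gcnt T K s" using gcnt_ge[OF _ K] s t by auto
      show "\<exists>j. 1 \<le> j \<and> j \<le> gcnt T K s \<and> rep d d (j * (M - 2) + 2) PX (\<lambda>x. X t x s)"
      proof (cases "a = t")
        case True
        have "rep d d M PX (\<lambda>x. X t x s)"
          by (rule rep_cong[OF step_rep[of s a]]) (use Xs X_init True in auto)
        moreover have "Suc (Suc (M - 2)) = M" using M by simp
        ultimately show ?thesis using cs M by (intro exI[of _ 1]) auto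
      next
        case False
        then have at: "t < a" "a = flrK T K s" unfolding a_def by auto
        then have "flrK T K s \<noteq> 0" using t by auto
        then obtain j where j: "j \<le> K" "a = T * real j / real K" "T * real j / real K < s"
          using flrK_cases[of T K s] at by auto
        have ca: "gcnt T K a < gcnt T K s" using gcnt_less[OF j(1,3)] j(2) by simp
        have aT: "a \<in> {t<..T}" using at j s by auto
        obtain j' where j': "1 \<le> j'" "j' \<le> gcnt T K a" "rep d d (j' * (M - 2) + 2) PX (\<lambda>x. X t x a)"
          using Suc.IH aT ca c by force
        have eq: "j' * (M - 2) + 2 + M - 2 = (j'+1) * (M - 2) + 2" using M by simp
        have "rep d d ((j'+1) * (M - 2) + 2) PX (\<lambda>x. stp s a (X t x a))"
          using rep_comp[OF j'(3) step_rep[of s a]] by (simp only: eq max.idem)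
        then have "rep d d ((j'+1) * (M - 2) + 2) PX (\<lambda>x. X t x s)"
          by (rule rep_cong) (use Xs in auto)
        then show ?thesis using j' ca by (intro exI[of _ "j'+1"]) auto
      qed
    qed
  qed
  show ?thesis
  proof (cases "s = t")
    case True
    have "1 * 2 \<le> K * (M - 1)" by (rule mult_le_mono) (use K M in auto)
    then have "rep d d (K * (M - 1) + 1) (2 * d) (\<lambda>x. x)"
      by (intro rep_id) (use d in auto)
    then have "rep d d (K * (M - 1) + 1) PX (\<lambda>x. x)" by (rule rep_mono) (use PX in auto)
    then show ?thesis by (rule rep_cong) (use X_init True in auto)
  next
    case False
    then have s': "s \<in> {t<..T}" using s by auto
    obtain j where j: "1 \<le> j" "j \<le> gcnt T K s" "rep d d (j * (M - 2) + 2) PX (\<lambda>x. X t x s)"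
      using main[of "gcnt T K s"] s' by blast
    have "j \<le> K" using j(2) gcnt_le[OF T K] s' by (meson greaterThanAtMost_iff le_trans)
    then have "j * (M - 2) + 2 \<le> K * (M - 1) + 1"
    proof -
      have "j * (M - 2) \<le> K * (M - 2)" using \<open>j \<le> K\<close> by simp
      also have "K * (M - 2) + 2 \<le> K * (M - 1) + 1"
      proof -
        obtain M' where M': "M = M' + 3" using M by (metis add.commute le_iff_add)
        show ?thesis using K unfolding M' by (simp add: algebra_simps)
      qed
      finally show ?thesis by linarith
    qed
    from rep_pad_back[OF j(3) this] show ?thesis
      by (rule rep_mono) (use PX in auto)
  qed
qed

lemma vec_index_out: "n \<le> j \<Longrightarrow> vec n f $ j = undef_vec (j - n)"
  by transfer (simp add: mk_vec_def)

definition trv :: "nat \<Rightarrow> real vec \<Rightarrow> real vec" where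
  "trv d v = vec d (\<lambda>j. if j < dim_vec v then v$j else 0)"
definition cvv :: "nat \<Rightarrow> real vec \<Rightarrow> real vec" where
  "cvv d v = vec d (\<lambda>i. \<Sum>j\<in>{d..<dim_vec v}. undef_vec (j - d) * v$j)"

lemma mat_vec_any: assumes A: "A \<in> carrier_mat d d"
  shows "A *\<^sub>v v = A *\<^sub>v trv d v + cvv d v"
proof (rule eq_vecI)
  fix i assume "i < dim_vec (A *\<^sub>v trv d v + cvv d v)"
  then have i: "i < d" by (simp add: cvv_def)
  have r: "row A i $ j = (if j < d then A $$ (i,j) else undef_vec (j - d))" for j
    using A i by (auto simp: row_def vec_index_out)
  have lhs: "(A *\<^sub>v v) $ i = (\<Sum>j\<in>{0..<dim_vec v}. row A i $ j * v $ j)"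
    using A i by (simp add: scalar_prod_def)
  have rhs: "(A *\<^sub>v trv d v + cvv d v) $ i = (\<Sum>j\<in>{0..<d}. A $$ (i,j) * (if j < dim_vec v then v$j else 0))
      + (\<Sum>j\<in>{d..<dim_vec v}. undef_vec (j - d) * v$j)"
    using A i by (simp add: scalar_prod_def trv_def cvv_def)
  show "(A *\<^sub>v v) $ i = (A *\<^sub>v trv d v + cvv d v) $ i"
  proof (cases "dim_vec v \<le> d")
    case True
    have "(\<Sum>j\<in>{0..<d}. A $$ (i,j) * (if j < dim_vec v then v$j else 0)) =
        (\<Sum>j\<in>{0..<dim_vec v}. A $$ (i,j) * (if j < dim_vec v then v$j else 0)) +
        (\<Sum>j\<in>{dim_vec v..<d}. A $$ (i,j) * (if j < dim_vec v then v$j else 0))"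
      by (rule sum.atLeastLessThan_concat[symmetric]) (use True in auto)
    also have "\<dots> = (\<Sum>j\<in>{0..<dim_vec v}. row A i $ j * v $ j)"
      using True r by (auto intro!: sum.cong)
    finally show ?thesis using lhs rhs True by simp
  next
    case False
    have "(\<Sum>j\<in>{0..<dim_vec v}. row A i $ j * v $ j) = (\<Sum>j\<in>{0..<d}. row A i $ j * v $ j)
       + (\<Sum>j\<in>{d..<dim_vec v}. row A i $ j * v $ j)"
      by (rule sum.atLeastLessThan_concat[symmetric]) (use False in auto)
    also have "\<dots> = (\<Sum>j\<in>{0..<d}. A $$ (i,j) * (if j < dim_vec v then v$j else 0))
      + (\<Sum>j\<in>{d..<dim_vec v}. undef_vec (j - d) * v$j)"
      using False r by (auto intro!: sum.cong arg_cong2[where f="(+)"])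
    finally show ?thesis using lhs rhs by simp
  qed
qed (use A in \<open>simp add: cvv_def\<close>)

lemma vec_alg: "dim_vec a = d \<Longrightarrow> dim_vec b = d \<Longrightarrow> dim_vec s = d \<Longrightarrow> dim_vec f = d \<Longrightarrow>
  dim_vec c1 = d \<Longrightarrow> dim_vec c2 = d \<Longrightarrow>
  1 \<cdot>\<^sub>v (1 \<cdot>\<^sub>v (1 \<cdot>\<^sub>v a + h \<cdot>\<^sub>v b) + 1 \<cdot>\<^sub>v s) + 1 \<cdot>\<^sub>v f + (c1 + c2) = a + h \<cdot>\<^sub>v b + (s + c1) + (f + (c2::real vec))"
  by (rule eq_vecI) simp_all

lemma step_rep:
  fixes bf :: "real vec \<Rightarrow> real vec" and sg Fg :: "real vec \<Rightarrow> real mat"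
  assumes d: "1 \<le> d"
  and rb: "rep d d Lb wb bf"
  and rs: "\<And>v. dim_vec v = d \<Longrightarrow> rep d d Ls ws (\<lambda>x. sg x *\<^sub>v v)"
  and rF: "\<And>v. dim_vec v = d \<Longrightarrow> rep d d LF wF (\<lambda>x. Fg x *\<^sub>v v)"
  and cs: "\<And>x. dim_vec x = d \<Longrightarrow> sg x \<in> carrier_mat d d \<and> Fg x \<in> carrier_mat d d"
  and M: "3 \<le> M" "Lb \<le> M" "Ls \<le> M" "LF \<le> M"
  shows "rep d d M (2 * real d + max wb (2 * real d) + max ws (2 * real d) + max wF (2 * real d))
     (\<lambda>y. y + h \<cdot>\<^sub>v bf y + sg y *\<^sub>v v1 + Fg y *\<^sub>v v2)"
proof -
  have I: "rep d d M (2 * real d) (\<lambda>x. x)" using rep_id[of d M] d M by simp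
  have B: "rep d d M (max wb (2 * real d)) bf" using rep_pad_front[OF rb M(2)] by simp
  have S: "rep d d M (max ws (2 * real d)) (\<lambda>x. sg x *\<^sub>v trv d v1)"
    using rep_pad_front[OF rs M(3), of "trv d v1"] by (simp add: trv_def)
  have F: "rep d d M (max wF (2 * real d)) (\<lambda>x. Fg x *\<^sub>v trv d v2)"
    using rep_pad_front[OF rF M(4), of "trv d v2"] by (simp add: trv_def)
  have bd: "\<And>x. dim_vec x = d \<Longrightarrow> dim_vec (bf x) = d" using rep_props[OF rb] by auto
  have R1: "rep d d M (2 * real d + max wb (2 * real d)) (\<lambda>y. 1 \<cdot>\<^sub>v y + h \<cdot>\<^sub>v bf y)"
    by (rule rep_lin2[OF I B])
  have R2: "rep d d M (2 * real d + max wb (2 * real d) + max ws (2 * real d))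
     (\<lambda>y. 1 \<cdot>\<^sub>v (1 \<cdot>\<^sub>v y + h \<cdot>\<^sub>v bf y) + 1 \<cdot>\<^sub>v (sg y *\<^sub>v trv d v1))"
    by (rule rep_lin2[OF R1 S])
  have R3: "rep d d M (2 * real d + max wb (2 * real d) + max ws (2 * real d) + max wF (2 * real d))
     (\<lambda>y. 1 \<cdot>\<^sub>v (1 \<cdot>\<^sub>v (1 \<cdot>\<^sub>v y + h \<cdot>\<^sub>v bf y) + 1 \<cdot>\<^sub>v (sg y *\<^sub>v trv d v1)) + 1 \<cdot>\<^sub>v (Fg y *\<^sub>v trv d v2))"
    by (rule rep_lin2[OF R2 F])
  have w: "real d \<le> 2 * real d + max wb (2 * real d) + max ws (2 * real d) + max wF (2 * real d)" by linarith
  have R4: "rep d d M (2 * real d + max wb (2 * real d) + max ws (2 * real d) + max wF (2 * real d))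
     (\<lambda>y. 1\<^sub>m d *\<^sub>v (1 \<cdot>\<^sub>v (1 \<cdot>\<^sub>v (1 \<cdot>\<^sub>v y + h \<cdot>\<^sub>v bf y) + 1 \<cdot>\<^sub>v (sg y *\<^sub>v trv d v1)) + 1 \<cdot>\<^sub>v (Fg y *\<^sub>v trv d v2))
          + (cvv d v1 + cvv d v2))"
  proof (rule rep_mono)
    show "rep d d M (max (2 * real d + max wb (2 * real d) + max ws (2 * real d) + max wF (2 * real d)) (real d))
     (\<lambda>y. 1\<^sub>m d *\<^sub>v (1 \<cdot>\<^sub>v (1 \<cdot>\<^sub>v (1 \<cdot>\<^sub>v y + h \<cdot>\<^sub>v bf y) + 1 \<cdot>\<^sub>v (sg y *\<^sub>v trv d v1)) + 1 \<cdot>\<^sub>v (Fg y *\<^sub>v trv d v2))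
          + (cvv d v1 + cvv d v2))"
      by (rule rep_post_affine[OF R3]) (use d in \<open>simp_all add: cvv_def\<close>)
  qed (use w in linarith)
  show ?thesis
  proof (rule rep_cong[OF R4])
    fix y :: "real vec" assume y: "dim_vec y = d"
    have dS: "dim_vec (sg y *\<^sub>v trv d v1) = d" "dim_vec (Fg y *\<^sub>v trv d v2) = d" "dim_vec (bf y) = d"
      using cs[OF y] bd[OF y] by auto
    have e1: "sg y *\<^sub>v v1 = sg y *\<^sub>v trv d v1 + cvv d v1" by (rule mat_vec_any) (use cs y in auto)
    have e2: "Fg y *\<^sub>v v2 = Fg y *\<^sub>v trv d v2 + cvv d v2" by (rule mat_vec_any) (use cs y in auto)
    have c: "1 \<cdot>\<^sub>v (1 \<cdot>\<^sub>v (1 \<cdot>\<^sub>v y + h \<cdot>\<^sub>v bf y) + 1 \<cdot>\<^sub>v (sg y *\<^sub>v trv d v1)) + 1 \<cdot>\<^sub>v (Fg y *\<^sub>v trv d v2) \<in> carrier_vec d"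
      by (rule carrier_vecI) (simp only: index_add_vec(2) index_smult_vec(2) dS(2))
    have "1\<^sub>m d *\<^sub>v (1 \<cdot>\<^sub>v (1 \<cdot>\<^sub>v (1 \<cdot>\<^sub>v y + h \<cdot>\<^sub>v bf y) + 1 \<cdot>\<^sub>v (sg y *\<^sub>v trv d v1)) + 1 \<cdot>\<^sub>v (Fg y *\<^sub>v trv d v2))
          + (cvv d v1 + cvv d v2) = y + h \<cdot>\<^sub>v bf y + (sg y *\<^sub>v trv d v1 + cvv d v1) + (Fg y *\<^sub>v trv d v2 + cvv d v2)"
      unfolding one_mult_mat_vec[OF c] by (rule vec_alg[where d=d]) (use dS y in \<open>simp_all add: cvv_def\<close>)
    also have "\<dots> = y + h \<cdot>\<^sub>v bf y + sg y *\<^sub>v v1 + Fg y *\<^sub>v v2" by (simp only: e1 e2)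
    finally show "1\<^sub>m d *\<^sub>v (1 \<cdot>\<^sub>v (1 \<cdot>\<^sub>v (1 \<cdot>\<^sub>v y + h \<cdot>\<^sub>v bf y) + 1 \<cdot>\<^sub>v (sg y *\<^sub>v trv d v1)) + 1 \<cdot>\<^sub>v (Fg y *\<^sub>v trv d v2))
          + (cvv d v1 + cvv d v2) = y + h \<cdot>\<^sub>v bf y + sg y *\<^sub>v v1 + Fg y *\<^sub>v v2" .
  qed
qed

definition pz :: "nat \<Rightarrow> real vec \<Rightarrow> real vec" where
  "pz a v = vec a (\<lambda>i. if i < dim_vec v then v$i else 0)"

definition padm :: "nat \<Rightarrow> nat \<Rightarrow> real mat \<Rightarrow> real mat" where
  "padm R a W = mat R a (\<lambda>(i,j). if i < dim_row W \<and> j < dim_col W then W$$(i,j) else 0)"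

lemma padm_mult: assumes "W \<in> carrier_mat r k" "k \<le> a" "dim_vec z = k" "i < R"
  shows "(padm R a W *\<^sub>v pz a z) $ i = (if i < r then (W *\<^sub>v z) $ i else 0)"
proof -
  have "(padm R a W *\<^sub>v pz a z) $ i = (\<Sum>j\<in>{0..<a}. (if i < r \<and> j < k then W$$(i,j) else 0) * (if j < k then z$j else 0))"
    using assms by (simp add: padm_def pz_def scalar_prod_def)
  also have "\<dots> = (\<Sum>j\<in>{0..<k}. (if i < r \<and> j < k then W$$(i,j) else 0) * (if j < k then z$j else 0))
     + (\<Sum>j\<in>{k..<a}. (if i < r \<and> j < k then W$$(i,j) else 0) * (if j < k then z$j else 0))"
    by (rule sum.atLeastLessThan_concat[symmetric]) (use assms in auto)
  also have "\<dots> = (\<Sum>j\<in>{0..<k}. (if i < r then W$$(i,j) * z$j else 0))"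
    by (simp, rule sum.cong, auto)
  also have "\<dots> = (if i < r then (W *\<^sub>v z) $ i else 0)"
    using assms by (simp add: scalar_prod_def)
  finally show ?thesis .
qed

fun widen :: "nat \<Rightarrow> nat \<Rightarrow> net \<Rightarrow> net" where
  "widen N a [] = []"
| "widen N a [(W,B)] = [(padm (dim_row W) a W, B)]"
| "widen N a ((W,B)#l#L) = (padm N a W, pz N B) # widen N N (l#L)"

lemma widen_props: "wfn k \<Phi> b \<Longrightarrow> k \<le> a \<Longrightarrow> (\<forall>x\<in>set (butlast (dms \<Phi>)). x \<le> N) \<Longrightarrow> 1 \<le> N \<Longrightarrow>
  wfn a (widen N a \<Phi>) b \<and> length (widen N a \<Phi>) = length \<Phi> \<and> dms (widen N a \<Phi>) = replicate (length \<Phi> - 1) N @ [b] \<and>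
  (\<forall>z. dim_vec z = k \<longrightarrow> realize (widen N a \<Phi>) (pz a z) = realize \<Phi> z)"
proof (induction N a \<Phi> arbitrary: k rule: widen.induct)
  case (2 N a W B)
  have W: "W \<in> carrier_mat b k" "dim_vec B = b" "1 \<le> k" "1 \<le> b" using "2.prems" by auto
  have "realize (widen N a [(W,B)]) (pz a z) = realize [(W,B)] z" if z: "dim_vec z = k" for z
  proof -
    have "padm b a W *\<^sub>v pz a z = W *\<^sub>v z"
    proof (rule eq_vecI)
      fix i assume "i < dim_vec (W *\<^sub>v z)"
      then have i: "i < b" using W by simp
      show "(padm b a W *\<^sub>v pz a z) $ i = (W *\<^sub>v z) $ i" using padm_mult[OF W(1) "2.prems"(2) z i] i by simp
    qed (use W in \<open>simp add: padm_def\<close>)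
    then show ?thesis using W by simp
  qed
  then show ?case using W "2.prems" by (auto simp: padm_def)
next
  case (3 N a W B l L)
  have W: "W \<in> carrier_mat (dim_vec B) k" "1 \<le> k" "1 \<le> dim_vec B" "wfn (dim_vec B) (l#L) b"
    using "3.prems" by auto
  have BN: "dim_vec B \<le> N" "\<forall>x\<in>set (butlast (dms (l#L))). x \<le> N"
    using "3.prems"(3) by (cases l; auto)+
  note IH = "3.IH"[OF W(4) BN(1) BN(2) "3.prems"(4)]
  obtain l' L' where lL: "widen N N (l#L) = l' # L'" using IH by (cases "widen N N (l#L)") auto
  have "realize (widen N a ((W,B)#l#L)) (pz a z) = realize ((W,B)#l#L) z" if z: "dim_vec z = k" for z
  proof -
    have "relu (padm N a W *\<^sub>v pz a z + pz N B) = pz N (relu (W *\<^sub>v z + B))"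
    proof (rule eq_vecI)
      fix i assume i: "i < dim_vec (pz N (relu (W *\<^sub>v z + B)))"
      then have i': "i < N" by (simp add: pz_def)
      show "relu (padm N a W *\<^sub>v pz a z + pz N B) $ i = pz N (relu (W *\<^sub>v z + B)) $ i"
        using padm_mult[OF W(1) "3.prems"(2) z i'] i' W by (simp add: relu_def pz_def padm_def)
    qed (simp add: relu_def pz_def padm_def)
    then show ?thesis using IH lL W z by (simp add: relu_def[symmetric])
  qed
  moreover have "wfn a (widen N a ((W,B)#l#L)) b" using IH lL W "3.prems"(2) BN
    by (cases l') (auto simp: padm_def pz_def)
  moreover have "dms (widen N a ((W,B)#l#L)) = replicate (length ((W,B)#l#L) - 1) N @ [b]"
    using IH by (simp add: pz_def)
  ultimately show ?case using IH by simp
qed auto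

lemma rep_uniform: assumes "rep a b L w h" "3 \<le> L" "real (nat (floor w)) \<ge> 1"
  shows "\<exists>\<Phi>. is_net \<Phi> \<and> arch \<Phi> = a # replicate (L - 2) (nat (floor w)) @ [b] \<and>
     (\<forall>x. dim_vec x = a \<longrightarrow> realize \<Phi> x = h x)"
proof -
  obtain \<Phi> where P: "wfn a \<Phi> b" "length \<Phi> + 1 = L" "real (Max (set (a # dms \<Phi>))) \<le> w"
      "\<forall>x. dim_vec x = a \<longrightarrow> realize \<Phi> x = h x"
    using assms(1) unfolding rep_def by blast
  have "\<forall>x\<in>set (butlast (dms \<Phi>)). x \<le> nat (floor w)"
  proof
    fix x assume "x \<in> set (butlast (dms \<Phi>))"
    then have "x \<in> set (a # dms \<Phi>)" by (meson in_set_butlastD list.set_intros(2))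
    then have "real x \<le> w" using P(3) le_max_real order_trans by blast
    then show "x \<le> nat (floor w)" by linarith
  qed
  note Wd = widen_props[OF P(1) le_refl this, of ] 
  have N1: "1 \<le> nat (floor w)" using assms(3) by linarith
  note Wd = Wd[OF N1]
  have pz: "\<And>x. dim_vec x = a \<Longrightarrow> pz a x = x" by (rule eq_vecI) (auto simp: pz_def)
  show ?thesis
  proof (intro exI conjI)
    show "is_net (widen (nat (floor w)) a \<Phi>)" using Wd P(2) assms(2) by (intro wfn_is_net[of a _ b]) auto
    show "arch (widen (nat (floor w)) a \<Phi>) = a # replicate (L - 2) (nat (floor w)) @ [b]"
      using Wd P(2) wfn_arch[of a "widen (nat (floor w)) a \<Phi>" b] by (simp add: numeral_2_eq_2)
    show "\<forall>x. dim_vec x = a \<longrightarrow> realize (widen (nat (floor w)) a \<Phi>) x = h x"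
      using Wd P(4) pz by metis
  qed
qed

lemma rep_of_net: assumes "is_net \<Phi>" "hd (arch \<Phi>) = a" "last (arch \<Phi>) = b"
    "\<And>x. dim_vec x = a \<Longrightarrow> realize \<Phi> x = h x"
  shows "rep a b (length (arch \<Phi>)) (real (maxnorm (arch \<Phi>))) h \<and> 3 \<le> length (arch \<Phi>)"
proof -
  have w: "wfn a \<Phi> b" using is_net_wfn[OF assms(1)] assms by simp
  have ar: "arch \<Phi> = a # dms \<Phi>" by (rule wfn_arch[OF w])
  have l: "length (arch \<Phi>) = length \<Phi> + 1" "2 \<le> length \<Phi>" using ar assms(1)
    by (auto simp: dms_def is_net_def)
  show ?thesis unfolding rep_def using w l ar assms(4) by (auto simp: maxnorm_def)
qed

lemma sum_four_pow3: "(\<Sum>i<n. (4::real) * 3^i) = 2 * (3^n - 1)"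
  by (induction n) (auto simp: algebra_simps)

lemma width_ineq:
  fixes m c dd :: real
  assumes m: "1 \<le> m" and c: "4 * dd \<le> c" and dd: "0 \<le> dd"
  shows "m^(n+1) * (c + 2*dd) + (2*dd + (\<Sum>i<n. m^(n-i) * (c * (3*m)^(i+1) + c * (3*m)^i)))
     \<le> c * (3*m)^(n+1)"
proof -
  have c0: "0 \<le> c" using c dd by linarith
  have t: "m^(n-i) * (c * (3*m)^(i+1) + c * (3*m)^i) \<le> c * m^(n+1) * (4 * 3^i)" if i: "i < n" for i
  proof -
    have e1: "m^(n-i) * (3*m)^(i+1) = 3^(i+1) * m^(n+1)"
    proof -
      have "m^(n-i) * m^(i+1) = m^(n+1)" using i by (simp add: power_add[symmetric])
      then show ?thesis by (simp add: power_mult_distrib algebra_simps)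
    qed
    have e2: "m^(n-i) * (3*m)^i = 3^i * m^n"
    proof -
      have "m^(n-i) * m^i = m^n" using i by (simp add: power_add[symmetric])
      then show ?thesis by (simp add: power_mult_distrib algebra_simps)
    qed
    have "m^n \<le> m^(n+1)" using m by (simp add: power_increasing)
    then have "3^i * m^n \<le> 3^i * m^(n+1)" by simp
    have "m^(n-i) * (c * (3*m)^(i+1) + c * (3*m)^i) = c * (m^(n-i) * (3*m)^(i+1)) + c * (m^(n-i) * (3*m)^i)"
      by (simp only: algebra_simps)
    also have "\<dots> = c * (3^(i+1) * m^(n+1)) + c * (3^i * m^n)" by (simp only: e1 e2)
    also have "\<dots> \<le> c * (3^(i+1) * m^(n+1)) + c * (3^i * m^(n+1))"
      using \<open>3^i * m^n \<le> 3^i * m^(n+1)\<close> c0 by (simp add: mult_left_mono)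
    also have "\<dots> = c * m^(n+1) * (4 * 3^i)" by (simp add: algebra_simps)
    finally show ?thesis .
  qed
  have "(\<Sum>i<n. m^(n-i) * (c * (3*m)^(i+1) + c * (3*m)^i)) \<le> (\<Sum>i<n. c * m^(n+1) * (4 * 3^i))"
    by (rule sum_mono) (use t in auto)
  also have "\<dots> = c * m^(n+1) * (\<Sum>i<n. 4 * 3^i)" by (simp only: sum_distrib_left)
  also have "\<dots> = c * m^(n+1) * (2 * (3^n - 1))" by (simp only: sum_four_pow3)
  finally have S: "(\<Sum>i<n. m^(n-i) * (c * (3*m)^(i+1) + c * (3*m)^i)) \<le> c * m^(n+1) * (2 * (3^n - 1))" .
  have mp: "1 \<le> m^(n+1)" using m by (rule one_le_power)
  have "2 * dd * 1 \<le> 2 * dd * m^(n+1)" using mp dd by (intro mult_left_mono) auto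
  then have "m^(n+1) * (c + 2*dd) + (2*dd + (\<Sum>i<n. m^(n-i) * (c * (3*m)^(i+1) + c * (3*m)^i)))
     \<le> m^(n+1) * (c + 2*dd) + 2 * dd * m^(n+1) + c * m^(n+1) * (2 * (3^n - 1))" using S by linarith
  also have "\<dots> = m^(n+1) * (4 * dd - c + 2 * c * 3^n)" by (simp add: algebra_simps)
  also have "\<dots> \<le> m^(n+1) * (2 * c * 3^n)" using c mp by (intro mult_left_mono) auto
  also have "\<dots> \<le> m^(n+1) * (3 * c * 3^n)" using c0 mp by (intro mult_left_mono) auto
  also have "\<dots> = c * (3*m)^(n+1)" by (simp add: power_mult_distrib algebra_simps)
  finally show ?thesis .
qed

theorem proposition5p12:
  fixes T c :: real and f :: "real \<Rightarrow> real"
    and \<beta> :: "nat \<Rightarrow> real vec \<Rightarrow> real vec" and \<sigma> :: "nat \<Rightarrow> real vec \<Rightarrow> real mat"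
    and \<gamma> :: "nat \<Rightarrow> real vec \<Rightarrow> real vec \<Rightarrow> real vec" and g :: "nat \<Rightarrow> real vec \<Rightarrow> real"
    and \<nu> :: "nat \<Rightarrow> real vec measure"
    and \<beta>e :: "nat \<Rightarrow> real \<Rightarrow> real vec \<Rightarrow> real vec" and \<sigma>e :: "nat \<Rightarrow> real \<Rightarrow> real vec \<Rightarrow> real mat"
    and \<gamma>e :: "nat \<Rightarrow> real \<Rightarrow> real vec \<Rightarrow> real vec \<Rightarrow> real vec"
    and ge :: "nat \<Rightarrow> real \<Rightarrow> real vec \<Rightarrow> real"
    and Fe :: "nat \<Rightarrow> real \<Rightarrow> real vec \<Rightarrow> real mat" and G :: "nat \<Rightarrow> real vec \<Rightarrow> real vec"
    and \<Phi>\<beta> :: "nat \<Rightarrow> real \<Rightarrow> net" and \<Phi>\<sigma> :: "nat \<Rightarrow> real \<Rightarrow> real vec \<Rightarrow> net"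
    and \<Phi>F :: "nat \<Rightarrow> real \<Rightarrow> real vec \<Rightarrow> net"
    and K :: nat
    and tt :: "int list \<Rightarrow> real"
    and W :: "nat \<Rightarrow> int list \<Rightarrow> real \<Rightarrow> real vec"
    and J :: "nat \<Rightarrow> int list \<Rightarrow> real \<Rightarrow> real vec"
    and X :: "nat \<Rightarrow> int list \<Rightarrow> real \<Rightarrow> real \<Rightarrow> real vec \<Rightarrow> real \<Rightarrow> real vec"
    and fe :: "real \<Rightarrow> real \<Rightarrow> real" and \<Phi>f :: "real \<Rightarrow> net" and \<Phi>g :: "nat \<Rightarrow> real \<Rightarrow> net"
    and U :: "nat \<Rightarrow> real \<Rightarrow> int list \<Rightarrow> int \<Rightarrow> int \<Rightarrow> real \<Rightarrow> real vec \<Rightarrow> real"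
    and cc :: "nat \<Rightarrow> real \<Rightarrow> real"
  assumes T_pos: "0 < T" and c_ge: "2 \<le> c" and f_cont: "continuous_on UNIV f"
    (* typing of the coefficient functions *)
    and dims: "\<And>d x z. 1 \<le> d \<Longrightarrow> dim_vec x = d \<Longrightarrow> dim_vec z = d \<Longrightarrow>
         dim_vec (\<beta> d x) = d \<and> \<sigma> d x \<in> carrier_mat d d \<and> dim_vec (\<gamma> d x z) = d"
    and dims_e: "\<And>d e x z. 1 \<le> d \<Longrightarrow> 0 < e \<Longrightarrow> e < 1 \<Longrightarrow> dim_vec x = d \<Longrightarrow> dim_vec z = d \<Longrightarrow>
         dim_vec (\<beta>e d e x) = d \<and> \<sigma>e d e x \<in> carrier_mat d d \<and> dim_vec (\<gamma>e d e x z) = d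
         \<and> Fe d e x \<in> carrier_mat d d \<and> dim_vec (G d z) = d"
    and \<gamma>_cont: "\<And>d. 1 \<le> d \<Longrightarrow> vcont2 d (\<gamma> d)"
    and \<nu>_levy: "\<And>d. 1 \<le> d \<Longrightarrow> levy_measure d (\<nu> d)"
    (* (A1) *)
    and A1: "\<And>d. 1 \<le> d \<Longrightarrow> \<exists>C. \<forall>x y z. dim_vec x = d \<longrightarrow> dim_vec y = d \<longrightarrow> dim_vec z = d \<longrightarrow>
         vnorm2 (\<gamma> d x z) \<le> C * min 1 (vnorm2 z) \<and>
         vnorm2 (\<gamma> d x z - \<gamma> d y z) \<le> C * vnorm2 (x - y) * min 1 (vnorm2 z)"
    (* (A2) *)
    and A2: "\<And>d. 1 \<le> d \<Longrightarrow> \<exists>lam>0. \<forall>x z. dim_vec x = d \<longrightarrow> dim_vec z = d \<longrightarrow>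
         (\<exists>Jm. vec_has_jacobian d (\<lambda>y. \<gamma> d y z) x Jm \<and>
            (\<forall>\<delta>\<in>{0..1}. lam \<le> \<bar>det (1\<^sub>m d + \<delta> \<cdot>\<^sub>m Jm)\<bar>))"
    (* (A3) *)
    and A3_lip: "\<And>d x y. 1 \<le> d \<Longrightarrow> dim_vec x = d \<Longrightarrow> dim_vec y = d \<Longrightarrow>
         ennreal (vnorm2 (\<beta> d x - \<beta> d y) + frob2 (\<sigma> d x - \<sigma> d y))
           + (\<integral>\<^sup>+ z. ennreal (vnorm2 (\<gamma> d x z - \<gamma> d y z)) \<partial>\<nu> d)
         \<le> ennreal (c * vnorm2 (x - y))"
    and A3_f: "\<And>w1 w2. (f w1 - f w2)^2 \<le> c * (w1 - w2)^2"
    and A3_g: "\<And>d x y. 1 \<le> d \<Longrightarrow> dim_vec x = d \<Longrightarrow> dim_vec y = d \<Longrightarrow>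
         (g d x - g d y)^2 \<le> c * real d powr c / T * vnorm2 (x - y)"
    and A3_0: "\<And>d. 1 \<le> d \<Longrightarrow>
         ennreal (vnorm2 (\<beta> d (0\<^sub>v d)) + frob2 (\<sigma> d (0\<^sub>v d)))
           + (\<integral>\<^sup>+ z. ennreal (vnorm2 (\<gamma> d (0\<^sub>v d) z)) \<partial>\<nu> d)
           + ennreal (T^3 * (\<bar>f 0\<bar> + 1)^2 + T * (g d (0\<^sub>v d))^2)
         \<le> ennreal (c * real d powr c)"
    (* (B1) *)
    and \<gamma>e_cont: "\<And>d e. 1 \<le> d \<Longrightarrow> 0 < e \<Longrightarrow> e < 1 \<Longrightarrow> vcont2 d (\<gamma>e d e)"
    and B1: "\<And>d e. 1 \<le> d \<Longrightarrow> 0 < e \<Longrightarrow> e < 1 \<Longrightarrow>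
         \<exists>C. \<forall>x y z. dim_vec x = d \<longrightarrow> dim_vec y = d \<longrightarrow> dim_vec z = d \<longrightarrow>
         vnorm2 (\<gamma>e d e x z) \<le> C * min 1 (vnorm2 z) \<and>
         vnorm2 (\<gamma>e d e x z - \<gamma>e d e y z) \<le> C * vnorm2 (x - y) * min 1 (vnorm2 z)"
    (* (B2) *)
    and B2_lip: "\<And>d e x y. 1 \<le> d \<Longrightarrow> 0 < e \<Longrightarrow> e < 1 \<Longrightarrow> dim_vec x = d \<Longrightarrow> dim_vec y = d \<Longrightarrow>
         ennreal (vnorm2 (\<beta>e d e x - \<beta>e d e y) + frob2 (\<sigma>e d e x - \<sigma>e d e y))
           + (\<integral>\<^sup>+ z. ennreal (vnorm2 (\<gamma>e d e x z - \<gamma>e d e y z)) \<partial>\<nu> d)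
         \<le> ennreal (c * vnorm2 (x - y))"
    and B2_g: "\<And>d e x y. 1 \<le> d \<Longrightarrow> 0 < e \<Longrightarrow> e < 1 \<Longrightarrow> dim_vec x = d \<Longrightarrow> dim_vec y = d \<Longrightarrow>
         (ge d e x - ge d e y)^2 \<le> c * real d powr c / T * vnorm2 (x - y)"
    and B2_0: "\<And>d e. 1 \<le> d \<Longrightarrow> 0 < e \<Longrightarrow> e < 1 \<Longrightarrow>
         ennreal (vnorm2 (\<beta>e d e (0\<^sub>v d)) + frob2 (\<sigma>e d e (0\<^sub>v d)))
           + (\<integral>\<^sup>+ z. ennreal (vnorm2 (\<gamma>e d e (0\<^sub>v d) z)) \<partial>\<nu> d)
           + ennreal (T * (ge d e (0\<^sub>v d))^2)
         \<le> ennreal (c * real d powr c)"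
    and B2_approx: "\<And>d e x. 1 \<le> d \<Longrightarrow> 0 < e \<Longrightarrow> e < 1 \<Longrightarrow> dim_vec x = d \<Longrightarrow>
         ennreal (vnorm2 (\<beta>e d e x - \<beta> d x) + frob2 (\<sigma>e d e x - \<sigma> d x))
           + (\<integral>\<^sup>+ z. ennreal (vnorm2 (\<gamma>e d e x z - \<gamma> d x z)) \<partial>\<nu> d)
           + ennreal ((ge d e x - g d x)^2)
         \<le> ennreal (e * c * real d powr c * (real d powr c + vnorm2 x))"
    (* factorisation of the jump coefficient and measurability of F, G *)
    and \<gamma>e_fact: "\<And>d e y z. 1 \<le> d \<Longrightarrow> 0 < e \<Longrightarrow> e < 1 \<Longrightarrow> dim_vec y = d \<Longrightarrow> dim_vec z = d \<Longrightarrow>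
         \<gamma>e d e y z = Fe d e y *\<^sub>v G d z"
    and Fe_meas: "\<And>d e i j. 1 \<le> d \<Longrightarrow> 0 < e \<Longrightarrow> e < 1 \<Longrightarrow> i < d \<Longrightarrow> j < d \<Longrightarrow>
         (\<lambda>y. Fe d e y $$ (i,j)) \<in> borel_measurable (vec_borel d)"
    and G_meas: "\<And>d i. 1 \<le> d \<Longrightarrow> i < d \<Longrightarrow> (\<lambda>z. G d z $ i) \<in> borel_measurable (vec_borel d)"
    (* network representations of the coefficients *)
    and \<Phi>\<beta>_net: "\<And>d e. 1 \<le> d \<Longrightarrow> 0 < e \<Longrightarrow> e < 1 \<Longrightarrow>
         is_net (\<Phi>\<beta> d e) \<and> hd (arch (\<Phi>\<beta> d e)) = d \<and> last (arch (\<Phi>\<beta> d e)) = d \<and>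
         (\<forall>x. dim_vec x = d \<longrightarrow> realize (\<Phi>\<beta> d e) x = \<beta>e d e x)"
    and \<Phi>\<sigma>_net: "\<And>d e v. 1 \<le> d \<Longrightarrow> 0 < e \<Longrightarrow> e < 1 \<Longrightarrow> dim_vec v = d \<Longrightarrow>
         is_net (\<Phi>\<sigma> d e v) \<and> hd (arch (\<Phi>\<sigma> d e v)) = d \<and> last (arch (\<Phi>\<sigma> d e v)) = d \<and>
         (\<forall>x. dim_vec x = d \<longrightarrow> realize (\<Phi>\<sigma> d e v) x = \<sigma>e d e x *\<^sub>v v) \<and>
         arch (\<Phi>\<sigma> d e v) = arch (\<Phi>\<sigma> d e (0\<^sub>v d))"
    and \<Phi>F_net: "\<And>d e v. 1 \<le> d \<Longrightarrow> 0 < e \<Longrightarrow> e < 1 \<Longrightarrow> dim_vec v = d \<Longrightarrow>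
         is_net (\<Phi>F d e v) \<and> hd (arch (\<Phi>F d e v)) = d \<and> last (arch (\<Phi>F d e v)) = d \<and>
         (\<forall>x. dim_vec x = d \<longrightarrow> realize (\<Phi>F d e v) x = Fe d e x *\<^sub>v v) \<and>
         arch (\<Phi>F d e v) = arch (\<Phi>F d e (0\<^sub>v d))"
    (* realisations at the fixed sample point omega *)
    and K_pos: "1 \<le> K"
    and tt_range: "\<And>\<theta>. \<theta> \<noteq> [] \<Longrightarrow> tt \<theta> \<in> {0..1}"
    and X_euler: "\<And>d \<theta> e t x. 1 \<le> d \<Longrightarrow> \<theta> \<noteq> [] \<Longrightarrow> 0 < e \<Longrightarrow> e < 1 \<Longrightarrow>
         t \<in> {0..T} \<Longrightarrow> dim_vec x = d \<Longrightarrow>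
         X d \<theta> e t x t = x \<and>
         (\<forall>s\<in>{t<..T}. let a = max t (flrK T K s) in
            X d \<theta> e t x s = X d \<theta> e t x a + (s - a) \<cdot>\<^sub>v \<beta>e d e (X d \<theta> e t x a)
              + \<sigma>e d e (X d \<theta> e t x a) *\<^sub>v (W d \<theta> s - W d \<theta> a)
              + Fe d e (X d \<theta> e t x a) *\<^sub>v (J d \<theta> s - J d \<theta> a))"
    (* networks for f_eps and g^d_eps *)
    and fe_cont: "\<And>e. 0 < e \<Longrightarrow> e < 1 \<Longrightarrow> continuous_on UNIV (fe e)"
    and \<Phi>f_net: "\<And>e. 0 < e \<Longrightarrow> e < 1 \<Longrightarrow>
         is_net (\<Phi>f e) \<and> hd (arch (\<Phi>f e)) = 1 \<and> last (arch (\<Phi>f e)) = 1 \<and>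
         (\<forall>y. realize (\<Phi>f e) (vec 1 (\<lambda>_. y)) = vec 1 (\<lambda>_. fe e y))"
    and \<Phi>g_net: "\<And>d e. 1 \<le> d \<Longrightarrow> 0 < e \<Longrightarrow> e < 1 \<Longrightarrow>
         is_net (\<Phi>g d e) \<and> hd (arch (\<Phi>g d e)) = d \<and> last (arch (\<Phi>g d e)) = 1 \<and>
         (\<forall>x. dim_vec x = d \<longrightarrow> realize (\<Phi>g d e) x = vec 1 (\<lambda>_. ge d e x))"
    (* the MLP recursion *)
    and U_rec: "\<And>d e \<theta> n m t x. 1 \<le> d \<Longrightarrow> 0 < e \<Longrightarrow> e < 1 \<Longrightarrow> \<theta> \<noteq> [] \<Longrightarrow> 1 \<le> m \<Longrightarrow>
         t \<in> {0..T} \<Longrightarrow> dim_vec x = d \<Longrightarrow>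
         U d e \<theta> (int n) (int m) t x =
           (if 1 \<le> n then 1 else 0) / real m ^ n *
             (\<Sum>i\<in>{1..m^n}. ge d e (X d (\<theta> @ [0, - int i]) e t x T))
         + (\<Sum>l<n. (T - t) / real m ^ (n - l) *
             (\<Sum>i\<in>{1..m^(n-l)}.
               (let \<eta> = \<theta> @ [int l, int i]; s = t + (T - t) * tt \<eta>; y = X d \<eta> e t x s in
                 fe e (U d e \<eta> (int l) (int m) s y)
                 - (if 1 \<le> l then 1 else 0) * fe e (U d e (\<theta> @ [- int l, int i]) (int l - 1) (int m) s y))))"
    and cc_ge: "\<And>d e. 1 \<le> d \<Longrightarrow> 0 < e \<Longrightarrow> e < 1 \<Longrightarrow>
         cc d e \<ge> 2 * real d + real (maxnorm (arch (\<Phi>f e))) + real (maxnorm (arch (\<Phi>g d e)))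
           + real (maxnorm (arch (\<Phi>\<beta> d e))) + real (maxnorm (arch (\<Phi>\<sigma> d e (0\<^sub>v d))))
           + real (maxnorm (arch (\<Phi>F d e (0\<^sub>v d))))"
  shows "\<forall>m n d e. 1 \<le> m \<longrightarrow> 1 \<le> d \<longrightarrow> 0 < e \<longrightarrow> e < 1 \<longrightarrow>
    (\<exists>\<Phi> :: real \<Rightarrow> int list \<Rightarrow> net.
       (\<forall>t\<in>{0..T}. \<forall>\<theta>. \<theta> \<noteq> [] \<longrightarrow> is_net (\<Phi> t \<theta>)) \<and>
       (\<forall>t1\<in>{0..T}. \<forall>t2\<in>{0..T}. \<forall>\<theta>1 \<theta>2. \<theta>1 \<noteq> [] \<longrightarrow> \<theta>2 \<noteq> [] \<longrightarrow>
          arch (\<Phi> t1 \<theta>1) = arch (\<Phi> t2 \<theta>2)) \<and>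
       (\<forall>t\<in>{0..T}. \<forall>\<theta>. \<theta> \<noteq> [] \<longrightarrow>
          int (length (arch (\<Phi> t \<theta>))) =
            (int n + 1) * (int K * (int (max (length (arch (\<Phi>\<beta> d e)))
                 (max (length (arch (\<Phi>\<sigma> d e (0\<^sub>v d)))) (length (arch (\<Phi>F d e (0\<^sub>v d)))))) - 1) + 1)
            + int n * (int (length (arch (\<Phi>f e))) - 2) + int (length (arch (\<Phi>g d e))) - 1) \<and>
       (\<forall>t\<in>{0..T}. \<forall>\<theta>. \<theta> \<noteq> [] \<longrightarrow> real (maxnorm (arch (\<Phi> t \<theta>))) \<le> cc d e * (3 * real m) ^ n) \<and>
       (\<forall>t\<in>{0..T}. \<forall>\<theta>. \<theta> \<noteq> [] \<longrightarrow> hd (arch (\<Phi> t \<theta>)) = d \<and>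
          (\<forall>x. dim_vec x = d \<longrightarrow> realize (\<Phi> t \<theta>) x = vec 1 (\<lambda>_. U d e \<theta> (int n) (int m) t x))))"
proof (intro allI impI)
  fix m n d :: nat and e :: real
  assume m: "1 \<le> m" and d: "1 \<le> d" and e0: "0 < e" and e1: "e < 1"
  define Lb where "Lb = length (arch (\<Phi>\<beta> d e))"
  define wb where "wb = real (maxnorm (arch (\<Phi>\<beta> d e)))"
  have rb: "rep d d Lb wb (\<beta>e d e) \<and> 3 \<le> Lb" unfolding Lb_def wb_def
    by (rule rep_of_net) (use \<Phi>\<beta>_net[OF d e0 e1] in auto)
  define Ls where "Ls = length (arch (\<Phi>\<sigma> d e (0\<^sub>v d)))"
  define ws where "ws = real (maxnorm (arch (\<Phi>\<sigma> d e (0\<^sub>v d))))"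
  have rs: "rep d d Ls ws (\<lambda>x. \<sigma>e d e x *\<^sub>v v) \<and> 3 \<le> Ls" if v: "dim_vec v = d" for v
  proof -
    note P = \<Phi>\<sigma>_net[OF d e0 e1 v]
    have "rep d d (length (arch (\<Phi>\<sigma> d e v))) (real (maxnorm (arch (\<Phi>\<sigma> d e v)))) (\<lambda>x. \<sigma>e d e x *\<^sub>v v)
       \<and> 3 \<le> length (arch (\<Phi>\<sigma> d e v))"
      by (rule rep_of_net) (use P in auto)
    then show ?thesis using P unfolding Ls_def ws_def by simp
  qed
  define LF where "LF = length (arch (\<Phi>F d e (0\<^sub>v d)))"
  define wF where "wF = real (maxnorm (arch (\<Phi>F d e (0\<^sub>v d))))"
  have rF: "rep d d LF wF (\<lambda>x. Fe d e x *\<^sub>v v) \<and> 3 \<le> LF" if v: "dim_vec v = d" for v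
  proof -
    note P = \<Phi>F_net[OF d e0 e1 v]
    have "rep d d (length (arch (\<Phi>F d e v))) (real (maxnorm (arch (\<Phi>F d e v)))) (\<lambda>x. Fe d e x *\<^sub>v v)
       \<and> 3 \<le> length (arch (\<Phi>F d e v))"
      by (rule rep_of_net) (use P in blast)+
    then show ?thesis using P unfolding LF_def wF_def by simp
  qed
  define Lf where "Lf = length (arch (\<Phi>f e))"
  define wf where "wf = real (maxnorm (arch (\<Phi>f e)))"
  have rf: "rep 1 1 Lf wf (\<lambda>v. sc (fe e (v $ 0))) \<and> 3 \<le> Lf" unfolding Lf_def wf_def
  proof (rule rep_of_net)
    fix x :: "real vec" assume x: "dim_vec x = 1"
    then have "x = sc (x $ 0)" by (intro eq_vecI) auto
    then show "realize (\<Phi>f e) x = sc (fe e (x $ 0))" using \<Phi>f_net[OF e0 e1] by metis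
  qed (use \<Phi>f_net[OF e0 e1] in auto)
  define Lg where "Lg = length (arch (\<Phi>g d e))"
  define wg where "wg = real (maxnorm (arch (\<Phi>g d e)))"
  have rg: "rep d 1 Lg wg (\<lambda>x. sc (ge d e x)) \<and> 3 \<le> Lg" unfolding Lg_def wg_def
    by (rule rep_of_net) (use \<Phi>g_net[OF d e0 e1] in auto)
  have rs0: "rep d d Ls ws (\<lambda>x. \<sigma>e d e x *\<^sub>v 0\<^sub>v d) \<and> 3 \<le> Ls" by (rule rs) simp
  have rF0: "rep d d LF wF (\<lambda>x. Fe d e x *\<^sub>v 0\<^sub>v d) \<and> 3 \<le> LF" by (rule rF) simp
  have wge: "real d \<le> wb" "real d \<le> ws" "real d \<le> wF" "1 \<le> wf" "real d \<le> wg"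
    using rep_props[OF conjunct1[OF rb]] rep_props[OF conjunct1[OF rs0]] rep_props[OF conjunct1[OF rF0]]
      rep_props[OF conjunct1[OF rf]] rep_props[OF conjunct1[OF rg]] by auto
  define cD where "cD = cc d e"
  have cge: "cD \<ge> 2 * real d + wf + wg + wb + ws + wF"
    using cc_ge[OF d e0 e1] unfolding cD_def wf_def wg_def wb_def ws_def wF_def by linarith
  define M where "M = max Lb (max Ls LF)"
  have M: "3 \<le> M" "Lb \<le> M" "Ls \<le> M" "LF \<le> M" using rb unfolding M_def by auto
  define E where "E = K * (M - 1) + 1"
  define PX where "PX = 2 * real d + max wb (2 * real d) + max ws (2 * real d) + max wF (2 * real d)"
  have PXc: "PX \<le> cD + 2 * real d" "2 * real d \<le> PX" "PX \<le> 3 * cD" "6 * real d + 1 \<le> cD"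
    unfolding PX_def using cge wge by (auto simp: max_def)
  have stp: "rep d d M PX (\<lambda>y. y + (s - a) \<cdot>\<^sub>v \<beta>e d e y + \<sigma>e d e y *\<^sub>v (W d \<theta> s - W d \<theta> a)
                 + Fe d e y *\<^sub>v (J d \<theta> s - J d \<theta> a))" for \<theta> s a
    unfolding PX_def
  proof (rule step_rep[OF d conjunct1[OF rb] conjunct1[OF rs] conjunct1[OF rF] _ M])
    fix x :: "real vec" assume "dim_vec x = d"
    then show "\<sigma>e d e x \<in> carrier_mat d d \<and> Fe d e x \<in> carrier_mat d d"
      using dims_e[OF d e0 e1, of x "0\<^sub>v d"] by auto
  qed
  have Xrep: "rep d d E PX (\<lambda>x. X d \<theta> e t x s)" if th: "\<theta> \<noteq> []" and t: "t \<in> {0..T}" and s: "s \<in> {t..T}"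
    for \<theta> t s
    unfolding E_def
  proof (rule euler_rep[where X="\<lambda>t x s. X d \<theta> e t x s" and t=t and s=s, OF T_pos K_pos M(1) d PXc(2) stp _ _ t s])
    fix x :: "real vec" assume x: "dim_vec x = d"
    show "X d \<theta> e t x t = x" using X_euler[OF d th e0 e1 t x] by simp
  next
    fix x :: "real vec" and s' assume x: "dim_vec x = d" and s': "s' \<in> {t<..T}"
    have "let a = max t (flrK T K s') in X d \<theta> e t x s' = X d \<theta> e t x a + (s' - a) \<cdot>\<^sub>v \<beta>e d e (X d \<theta> e t x a)
       + \<sigma>e d e (X d \<theta> e t x a) *\<^sub>v (W d \<theta> s' - W d \<theta> a) + Fe d e (X d \<theta> e t x a) *\<^sub>v (J d \<theta> s' - J d \<theta> a)"
      using X_euler[OF d th e0 e1 t x] s' by blast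
    then show "X d \<theta> e t x s' = X d \<theta> e t x (max t (flrK T K s')) + (s' - max t (flrK T K s')) \<cdot>\<^sub>v \<beta>e d e (X d \<theta> e t x (max t (flrK T K s')))
       + \<sigma>e d e (X d \<theta> e t x (max t (flrK T K s'))) *\<^sub>v (W d \<theta> s' - W d \<theta> (max t (flrK T K s')))
       + Fe d e (X d \<theta> e t x (max t (flrK T K s'))) *\<^sub>v (J d \<theta> s' - J d \<theta> (max t (flrK T K s')))"
      unfolding Let_def .
  qed
  define LL where "LL = (\<lambda>l::nat. (l+1)*E + l*(Lf-2) + Lg - 1)"
  have E3: "3 \<le> E"
  proof -
    have "1 * 2 \<le> K * (M - 1)" by (rule mult_le_mono) (use K_pos M in auto)
    then show ?thesis unfolding E_def by simp
  qed
  have Lf3: "3 \<le> Lf" and Lg3: "3 \<le> Lg" using rf rg by auto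
  have LL0: "2 \<le> LL l" for l unfolding LL_def using Lg3 E3 by simp
  have LLg: "E + Lg - 2 \<le> LL k" for k unfolding LL_def using Lg3 E3 by simp
  have LLA: "E + LL l - 2 + Lf - 2 \<le> LL k" if lk: "l < k" for l k
  proof -
    have h1: "(l+2)*E \<le> (k+1)*E" using lk by (intro mult_le_mono1) simp
    have h2: "(l+1)*(Lf-2) \<le> k*(Lf-2)" using lk by (intro mult_le_mono1) simp
    have h3: "(l+2)*E = (l+1)*E + E" "(l+1)*(Lf-2) = l*(Lf-2) + (Lf-2)" by (simp_all add: add_mult_distrib)
    show ?thesis unfolding LL_def using h1 h2 h3 Lf3 Lg3 E3 by linarith
  qed
  have main: "\<forall>\<theta> t. \<theta> \<noteq> [] \<longrightarrow> t \<in> {0..T} \<longrightarrow>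
      rep d 1 (LL k) (cD * (3 * real m)^k) (\<lambda>x. sc (U d e \<theta> (int k) (int m) t x))" for k
  proof (induction k rule: less_induct)
    case (less k)
    have U0: "U d e \<eta> (int 0) (int m) s y = 0" if "\<eta> \<noteq> []" "s \<in> {0..T}" "dim_vec y = d" for \<eta> s y
      using U_rec[OF d e0 e1 that(1) m that(2) that(3), of 0] by simp
    have mk: "1 \<le> m ^ j" for j using m by (simp add: one_le_power)
    have bigl: "3 * cD \<le> cD * (3 * real m)^l" if "1 \<le> l" for l
    proof -
      have "(3 * real m)^1 \<le> (3 * real m)^l" by (rule power_increasing) (use that m in auto)
      then have "3 \<le> (3 * real m)^l" using m by simp
      then show ?thesis using PXc(4) by (simp add: mult.commute mult_left_mono)
    qed
    have d1: "1 \<le> real d" using d by simp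
    have wfc: "wf \<le> cD" "wg \<le> cD" "2 \<le> cD" using cge wge PXc(4) d1 by linarith+
    have bnd: "PX \<le> cD * (3 * real m)^l" "wf \<le> cD * (3 * real m)^l" "2 \<le> cD * (3 * real m)^l"
      "cD * (3 * real m)^l \<le> cD * (3 * real m)^l" if "1 \<le> l" for l
      using bigl[OF that] PXc wfc by linarith+
    show ?case
    proof (intro allI impI)
      fix \<theta> :: "int list" and t :: real assume th: "\<theta> \<noteq> []" and t: "t \<in> {0..T}"
      have Xd: "dim_vec (X d \<eta> e t x s) = d" if "\<eta> \<noteq> []" "s \<in> {t..T}" "dim_vec x = d" for \<eta> s x
        using rep_props[OF Xrep[OF that(1) t that(2)]] that(3) by auto
      have sI: "t + (T - t) * tt \<eta> \<in> {t..T}" "t + (T - t) * tt \<eta> \<in> {0..T}" if "\<eta> \<noteq> []" for \<eta>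
      proof -
        have tt: "0 \<le> tt \<eta>" "tt \<eta> \<le> 1" using tt_range[OF that] by auto
        have "0 \<le> (T - t) * tt \<eta>" using tt t by simp
        moreover have "(T - t) * tt \<eta> \<le> T - t" using tt t by (simp add: mult_left_le)
        ultimately show "t + (T - t) * tt \<eta> \<in> {t..T}" "t + (T - t) * tt \<eta> \<in> {0..T}" using t by auto
      qed
      show "rep d 1 (LL k) (cD * (3 * real m)^k) (\<lambda>x. sc (U d e \<theta> (int k) (int m) t x))"
      proof (cases "k = 0")
        case True
        have "rep d 1 (LL 0) (max d 2) (\<lambda>_. sc 0)" by (rule rep_const) (use d LL0 in auto)
        then have "rep d 1 (LL 0) (cD * (3 * real m)^0) (\<lambda>_. sc 0)"
          by (rule rep_mono) (use PXc(4) d1 wfc in \<open>auto simp: max_def\<close>)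
        then show ?thesis unfolding True by (rule rep_cong) (use U0 th t in auto)
      next
        case False
        then obtain n' where k: "k = Suc n'" by (cases k) auto
        have G1: "rep d 1 (LL k) (cD + 2 * real d) (\<lambda>x. sc (ge d e (X d (\<theta> @ [0, - int i]) e t x T)))" for i
        proof -
          have X1: "rep d d E PX (\<lambda>x. X d (\<theta> @ [0, - int i]) e t x T)" by (rule Xrep) (use t in auto)
          have "rep d 1 (E + Lg - 2) (max PX wg) (\<lambda>x. sc (ge d e (X d (\<theta> @ [0, - int i]) e t x T)))"
            by (rule rep_comp[OF X1 conjunct1[OF rg]])
          from rep_pad_back[OF this LLg[of k]] show ?thesis
            by (rule rep_mono) (use PXc wfc in \<open>auto simp: max_def\<close>)
        qed
        have G: "rep d 1 (LL k) (real (m^k) * (cD + 2 * real d))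
            (\<lambda>x. sc ((if 1 \<le> k then 1 else 0) / real m ^ k * (\<Sum>i\<in>{1..m^k}. ge d e (X d (\<theta> @ [0, - int i]) e t x T)) + 0))"
        proof -
          have "rep d 1 (LL k) (\<Sum>i\<in>{1..m^k}. cD + 2 * real d) (\<lambda>x. sc (\<Sum>i\<in>{1..m^k}. ge d e (X d (\<theta> @ [0, - int i]) e t x T)))"
            by (rule rep_sum) (use G1 mk in auto)
          then have "rep d 1 (LL k) (real (m^k) * (cD + 2 * real d)) (\<lambda>x. sc (\<Sum>i\<in>{1..m^k}. ge d e (X d (\<theta> @ [0, - int i]) e t x T)))"
            by simp
          then show ?thesis by (rule rep_scal)
        qed
        define trm where "trm = (\<lambda>l i x. (let \<eta> = \<theta> @ [int l, int i]; s = t + (T - t) * tt \<eta>; y = X d \<eta> e t x s in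
                 fe e (U d e \<eta> (int l) (int m) s y)
                 - (if 1 \<le> l then 1 else 0) * fe e (U d e (\<theta> @ [- int l, int i]) (int l - 1) (int m) s y)))"
        define tm where "tm = (\<lambda>l x. (T - t) / real m ^ (k - l) * (\<Sum>i\<in>{1..m^(k-l)}. trm l i x))"
        define wl where "wl = (\<lambda>l. if l = 0 then 2 * real d
            else real m ^ (k - l) * (cD * (3 * real m)^l + cD * (3 * real m)^(l-1)))"
        have Lt: "rep d 1 (LL k) (wl l) (\<lambda>x. sc (tm l x))" if lk: "l < k" for l
        proof (cases "l = 0")
          case True
          have cst: "tm l x = (T - t) / real m ^ k * (real (m^k) * fe e 0)" if x: "dim_vec x = d" for x
          proof -
            have "trm 0 i x = fe e 0" for i
            proof -
              define \<eta> where "\<eta> = \<theta> @ [int 0, int i]"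
              define s where "s = t + (T - t) * tt \<eta>"
              have eta: "\<eta> \<noteq> []" unfolding \<eta>_def by simp
              have "U d e \<eta> (int 0) (int m) s (X d \<eta> e t x s) = 0"
                by (rule U0[OF eta]) (use sI[OF eta] Xd[OF eta _ x] in \<open>auto simp: s_def\<close>)
              then show ?thesis unfolding trm_def \<eta>_def s_def Let_def by simp
            qed
            then show ?thesis unfolding tm_def True by simp
          qed
          have "rep d 1 (LL k) (max d 2) (\<lambda>_. sc ((T - t) / real m ^ k * (real (m^k) * fe e 0)))"
            by (rule rep_const) (use d LL0 in auto)
          then have "rep d 1 (LL k) (wl l) (\<lambda>_. sc ((T - t) / real m ^ k * (real (m^k) * fe e 0)))"
            by (rule rep_mono) (use d True in \<open>auto simp: wl_def max_def\<close>)
          then show ?thesis by (rule rep_cong) (use cst in auto)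
        next
          case False
          then have l1: "1 \<le> l" by simp
          have A: "rep d 1 (LL k) (cD * (3 * real m)^l)
             (\<lambda>x. sc (fe e (U d e (\<theta> @ [int l, int i]) (int l) (int m) (t + (T - t) * tt (\<theta> @ [int l, int i]))
                 (X d (\<theta> @ [int l, int i]) e t x (t + (T - t) * tt (\<theta> @ [int l, int i]))))))" for i
          proof -
            define \<eta> where "\<eta> = \<theta> @ [int l, int i]"
            define s where "s = t + (T - t) * tt \<eta>"
            have eta: "\<eta> \<noteq> []" unfolding \<eta>_def by simp
            have X1: "rep d d E PX (\<lambda>x. X d \<eta> e t x s)" by (rule Xrep[OF eta t]) (use sI[OF eta] in \<open>simp add: s_def\<close>)
            have U1: "rep d 1 (LL l) (cD * (3 * real m)^l) (\<lambda>y. sc (U d e \<eta> (int l) (int m) s y))"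
              using less.IH[OF lk] eta sI[OF eta] unfolding s_def by blast
            have "rep d 1 (E + LL l - 2 + Lf - 2) (max (max PX (cD * (3 * real m)^l)) wf)
                (\<lambda>x. sc (fe e (sc (U d e \<eta> (int l) (int m) s (X d \<eta> e t x s)) $ 0)))"
              by (rule rep_comp[OF rep_comp[OF X1 U1] conjunct1[OF rf]])
            from rep_pad_back[OF this LLA[OF lk]]
            have "rep d 1 (LL k) (cD * (3 * real m)^l) (\<lambda>x. sc (fe e (sc (U d e \<eta> (int l) (int m) s (X d \<eta> e t x s)) $ 0)))"
              by (rule rep_mono) (intro max.boundedI; use bnd[OF l1] in \<open>auto\<close>)
            then show ?thesis unfolding \<eta>_def s_def by simp
          qed
          have Ti: "rep d 1 (LL k) (cD * (3 * real m)^l + cD * (3 * real m)^(l-1)) (\<lambda>x. sc (trm l i x))" for i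
          proof -
            define \<eta> where "\<eta> = \<theta> @ [int l, int i]"
            define \<eta>' where "\<eta>' = \<theta> @ [- int l, int i]"
            define s where "s = t + (T - t) * tt \<eta>"
            have eta: "\<eta> \<noteq> []" "\<eta>' \<noteq> []" unfolding \<eta>_def \<eta>'_def by simp_all
            have il: "int l - 1 = int (l - 1)" using l1 by simp
            have trm_eq: "trm l i x = fe e (U d e \<eta> (int l) (int m) s (X d \<eta> e t x s))
                - fe e (U d e \<eta>' (int l - 1) (int m) s (X d \<eta> e t x s))" for x
              unfolding trm_def \<eta>_def \<eta>'_def s_def Let_def using l1 by simp
            have A': "rep d 1 (LL k) (cD * (3 * real m)^l) (\<lambda>x. sc (fe e (U d e \<eta> (int l) (int m) s (X d \<eta> e t x s))))"
              using A[of i] unfolding \<eta>_def s_def .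
            show ?thesis
            proof (cases "l = 1")
              case True
              have "rep d 1 (LL k) (cD * (3 * real m)^l) (\<lambda>x. sc (1 * fe e (U d e \<eta> (int l) (int m) s (X d \<eta> e t x s)) + - fe e 0))"
                by (rule rep_scal[OF A'])
              then have "rep d 1 (LL k) (cD * (3 * real m)^l + cD * (3 * real m)^(l-1))
                  (\<lambda>x. sc (1 * fe e (U d e \<eta> (int l) (int m) s (X d \<eta> e t x s)) + - fe e 0))"
                by (rule rep_mono) (use PXc(4) in simp)
              then show ?thesis
              proof (rule rep_cong)
                fix x :: "real vec" assume x: "dim_vec x = d"
                have "U d e \<eta>' (int l - 1) (int m) s (X d \<eta> e t x s) = 0"
                  unfolding True using U0[OF eta(2)] sI[OF eta(1)] Xd[OF eta(1) _ x] by (simp add: s_def)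
                then show "sc (1 * fe e (U d e \<eta> (int l) (int m) s (X d \<eta> e t x s)) + - fe e 0) = sc (trm l i x)"
                  using trm_eq[of x] by simp
              qed
            next
              case False
              then have l2: "1 \<le> l - 1" "l - 1 < k" using l1 lk by auto
              have X1: "rep d d E PX (\<lambda>x. X d \<eta> e t x s)" by (rule Xrep[OF eta(1) t]) (use sI[OF eta(1)] in \<open>simp add: s_def\<close>)
              have U1: "rep d 1 (LL (l-1)) (cD * (3 * real m)^(l-1)) (\<lambda>y. sc (U d e \<eta>' (int (l-1)) (int m) s y))"
                using less.IH[OF l2(2)] eta sI[OF eta(1)] unfolding s_def by blast
              have "rep d 1 (E + LL (l-1) - 2 + Lf - 2) (max (max PX (cD * (3 * real m)^(l-1))) wf)
                  (\<lambda>x. sc (fe e (sc (U d e \<eta>' (int (l-1)) (int m) s (X d \<eta> e t x s)) $ 0)))"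
                by (rule rep_comp[OF rep_comp[OF X1 U1] conjunct1[OF rf]])
              from rep_pad_back[OF this LLA[OF l2(2)]]
              have "rep d 1 (LL k) (cD * (3 * real m)^(l-1)) (\<lambda>x. sc (fe e (sc (U d e \<eta>' (int (l-1)) (int m) s (X d \<eta> e t x s)) $ 0)))"
                by (rule rep_mono) (intro max.boundedI; use bnd[OF l2(1)] in \<open>auto\<close>)
              then have B': "rep d 1 (LL k) (cD * (3 * real m)^(l-1)) (\<lambda>x. sc (fe e (U d e \<eta>' (int (l-1)) (int m) s (X d \<eta> e t x s))))"
                by simp
              have B'': "rep d 1 (LL k) (cD * (3 * real m)^(l-1)) (\<lambda>x. sc (fe e (U d e \<eta>' (int l - 1) (int m) s (X d \<eta> e t x s))))"
                unfolding il by (rule B')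
              from rep_add2[OF A' B'', of 1 "-1"] show ?thesis
                by (rule rep_cong) (use trm_eq in simp)
            qed
          qed
          have "rep d 1 (LL k) (\<Sum>i\<in>{1..m^(k-l)}. cD * (3 * real m)^l + cD * (3 * real m)^(l-1))
              (\<lambda>x. sc (\<Sum>i\<in>{1..m^(k-l)}. trm l i x))"
            by (rule rep_sum) (use Ti mk in auto)
          then have "rep d 1 (LL k) (wl l) (\<lambda>x. sc (\<Sum>i\<in>{1..m^(k-l)}. trm l i x))"
            using False by (simp add: wl_def)
          then have "rep d 1 (LL k) (wl l) (\<lambda>x. sc ((T - t) / real m ^ (k - l) * (\<Sum>i\<in>{1..m^(k-l)}. trm l i x) + 0))"
            by (rule rep_scal)
          then show ?thesis unfolding tm_def by simp
        qed
        have LS: "rep d 1 (LL k) (\<Sum>l<k. wl l) (\<lambda>x. sc (\<Sum>l<k. tm l x))"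
          by (rule rep_sum) (use Lt k in auto)
        from rep_add2[OF G LS, of 1 1]
        have R: "rep d 1 (LL k) (real (m^k) * (cD + 2 * real d) + (\<Sum>l<k. wl l))
          (\<lambda>x. sc (1 * ((if 1 \<le> k then 1 else 0) / real m ^ k * (\<Sum>i\<in>{1..m^k}. ge d e (X d (\<theta> @ [0, - int i]) e t x T)) + 0)
             + 1 * (\<Sum>l<k. tm l x)))" .
        have W: "real (m^k) * (cD + 2 * real d) + (\<Sum>l<k. wl l) \<le> cD * (3 * real m)^k"
        proof -
          have "(\<Sum>l<k. wl l) = wl 0 + (\<Sum>i<n'. wl (Suc i))" unfolding k by (rule sum.lessThan_Suc_shift)
          also have "\<dots> = 2 * real d + (\<Sum>i<n'. real m ^ (n' - i) * (cD * (3 * real m)^(i+1) + cD * (3 * real m)^i))"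
            by (simp add: wl_def k)
          finally have "(\<Sum>l<k. wl l) = 2 * real d + (\<Sum>i<n'. real m ^ (n' - i) * (cD * (3 * real m)^(i+1) + cD * (3 * real m)^i))" .
          then show ?thesis using width_ineq[of "real m" "real d" cD n'] m PXc(4) unfolding k
            by (simp add: of_nat_power)
        qed
        show ?thesis
        proof (rule rep_cong[OF rep_mono[OF R W]])
          fix x :: "real vec" assume x: "dim_vec x = d"
          show "sc (1 * ((if 1 \<le> k then 1 else 0) / real m ^ k * (\<Sum>i\<in>{1..m^k}. ge d e (X d (\<theta> @ [0, - int i]) e t x T)) + 0)
             + 1 * (\<Sum>l<k. tm l x)) = sc (U d e \<theta> (int k) (int m) t x)"
            unfolding U_rec[OF d e0 e1 th m t x, of k] tm_def trm_def by simp
        qed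
      qed
    qed
  qed
  show "\<exists>\<Phi> :: real \<Rightarrow> int list \<Rightarrow> net.
       (\<forall>t\<in>{0..T}. \<forall>\<theta>. \<theta> \<noteq> [] \<longrightarrow> is_net (\<Phi> t \<theta>)) \<and>
       (\<forall>t1\<in>{0..T}. \<forall>t2\<in>{0..T}. \<forall>\<theta>1 \<theta>2. \<theta>1 \<noteq> [] \<longrightarrow> \<theta>2 \<noteq> [] \<longrightarrow>
          arch (\<Phi> t1 \<theta>1) = arch (\<Phi> t2 \<theta>2)) \<and>
       (\<forall>t\<in>{0..T}. \<forall>\<theta>. \<theta> \<noteq> [] \<longrightarrow>
          int (length (arch (\<Phi> t \<theta>))) =
            (int n + 1) * (int K * (int (max (length (arch (\<Phi>\<beta> d e)))
                 (max (length (arch (\<Phi>\<sigma> d e (0\<^sub>v d)))) (length (arch (\<Phi>F d e (0\<^sub>v d)))))) - 1) + 1)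
            + int n * (int (length (arch (\<Phi>f e))) - 2) + int (length (arch (\<Phi>g d e))) - 1) \<and>
       (\<forall>t\<in>{0..T}. \<forall>\<theta>. \<theta> \<noteq> [] \<longrightarrow> real (maxnorm (arch (\<Phi> t \<theta>))) \<le> cc d e * (3 * real m) ^ n) \<and>
       (\<forall>t\<in>{0..T}. \<forall>\<theta>. \<theta> \<noteq> [] \<longrightarrow> hd (arch (\<Phi> t \<theta>)) = d \<and>
          (\<forall>x. dim_vec x = d \<longrightarrow> realize (\<Phi> t \<theta>) x = vec 1 (\<lambda>_. U d e \<theta> (int n) (int m) t x)))"
  proof -
    define Wd where "Wd = nat (floor (cD * (3 * real m)^n))"
    define Pr where "Pr = (\<lambda>t \<theta> \<Psi>. is_net \<Psi> \<and> arch \<Psi> = d # replicate (LL n - 2) Wd @ [1] \<and>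
       (\<forall>x. dim_vec x = d \<longrightarrow> realize \<Psi> x = sc (U d e \<theta> (int n) (int m) t x)))"
    have pow1: "1 \<le> (3 * real m)^n" using m by (intro one_le_power) simp
    have cw: "cD \<le> cD * (3 * real m)^n" using pow1 PXc(4) by (simp add: mult_le_cancel_left1)
    have fl: "1 \<le> floor (cD * (3 * real m)^n)" unfolding le_floor_iff using cw PXc(4) by (simp only: of_int_1)
    have Wd1: "real (nat (floor (cD * (3 * real m)^n))) \<ge> 1" using fl by linarith
    have LL3: "3 \<le> LL n" using LLg[of n] E3 Lg3 by linarith
    have ex: "\<exists>\<Psi>. Pr t \<theta> \<Psi>" if t: "t \<in> {0..T}" and th: "\<theta> \<noteq> []" for t \<theta>
      using rep_uniform[OF main[rule_format, OF th t] LL3 Wd1] unfolding Pr_def Wd_def .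
    define \<Phi> where "\<Phi> = (\<lambda>t \<theta>. SOME \<Psi>. Pr t \<theta> \<Psi>)"
    have P: "Pr t \<theta> (\<Phi> t \<theta>)" if "t \<in> {0..T}" "\<theta> \<noteq> []" for t \<theta>
      unfolding \<Phi>_def using someI_ex[OF ex[OF that]] .
    have len: "int (LL n) = (int n + 1) * (int K * (int (max (length (arch (\<Phi>\<beta> d e)))
                 (max (length (arch (\<Phi>\<sigma> d e (0\<^sub>v d)))) (length (arch (\<Phi>F d e (0\<^sub>v d)))))) - 1) + 1)
            + int n * (int (length (arch (\<Phi>f e))) - 2) + int (length (arch (\<Phi>g d e))) - 1"
    proof -
      have "int M = int (max (length (arch (\<Phi>\<beta> d e)))
                 (max (length (arch (\<Phi>\<sigma> d e (0\<^sub>v d)))) (length (arch (\<Phi>F d e (0\<^sub>v d))))))"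
        unfolding M_def Lb_def Ls_def LF_def by simp
      moreover have "int E = int K * (int M - 1) + 1" unfolding E_def using M(1) by (simp add: of_nat_diff)
      moreover have "int (LL n) = (int n + 1) * int E + int n * (int Lf - 2) + int Lg - 1"
      proof -
        have a: "int (Lf - 2) = int Lf - 2" using Lf3 by simp
        have b: "int (LL n) = int ((n+1)*E + n*(Lf-2) + Lg) - 1" unfolding LL_def using Lg3 by (subst of_nat_diff) auto
        have c: "int ((n+1)*E + n*(Lf-2) + Lg) = (int n + 1) * int E + int n * (int Lf - 2) + int Lg"
          by (simp only: of_nat_add of_nat_mult a of_nat_1)
        show ?thesis using b c by simp
      qed
      ultimately show ?thesis unfolding Lf_def Lg_def by simp
    qed
    have mx: "real (maxnorm (d # replicate (LL n - 2) Wd @ [1])) \<le> cc d e * (3 * real m) ^ n"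
      unfolding maxnorm_def cD_def[symmetric]
    proof (rule max_real_le)
      fix k assume "k \<in> set (d # replicate (LL n - 2) Wd @ [1])"
      then have "k = d \<or> k = Wd \<or> k = 1" by (auto split: if_splits)
      moreover have vfl: "real (nat (floor (cD * (3 * real m)^n))) \<le> cD * (3 * real m)^n"
      proof -
        have "real (nat (floor (cD * (3 * real m)^n))) = of_int (floor (cD * (3 * real m)^n))" using fl by simp
        then show ?thesis using of_int_floor_le by simp
      qed
      ultimately consider "k = d" | "k = nat (floor (cD * (3 * real m)^n))" | "k = 1"
        and "real (nat (floor (cD * (3 * real m)^n))) \<le> cD * (3 * real m)^n" unfolding Wd_def by blast
      then show "real k \<le> cD * (3 * real m) ^ n"
      proof cases
        case 1 then show ?thesis unfolding 1 using cw PXc(4) by linarith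
      next
        case 2 show ?thesis unfolding 2 by (rule vfl)
      next
        case 3 then show ?thesis unfolding 3 using cw PXc(4) by (simp only: of_nat_1)
      qed
    qed
    show ?thesis
    proof (intro exI[of _ \<Phi>] conjI ballI allI impI)
      fix t :: real and \<theta> :: "int list" assume "t \<in> {0..T}" "\<theta> \<noteq> []"
      note Q = P[OF this, unfolded Pr_def]
      show "is_net (\<Phi> t \<theta>)" using Q by blast
      show "int (length (arch (\<Phi> t \<theta>))) = (int n + 1) * (int K * (int (max (length (arch (\<Phi>\<beta> d e)))
                 (max (length (arch (\<Phi>\<sigma> d e (0\<^sub>v d)))) (length (arch (\<Phi>F d e (0\<^sub>v d)))))) - 1) + 1)
            + int n * (int (length (arch (\<Phi>f e))) - 2) + int (length (arch (\<Phi>g d e))) - 1"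
        using Q LL3 len by simp
      show "real (maxnorm (arch (\<Phi> t \<theta>))) \<le> cc d e * (3 * real m) ^ n" using Q mx by simp
      show "hd (arch (\<Phi> t \<theta>)) = d" using Q by simp
      fix x :: "real vec" assume "dim_vec x = d"
      then show "realize (\<Phi> t \<theta>) x = vec 1 (\<lambda>_. U d e \<theta> (int n) (int m) t x)" using Q by blast
    next
      fix t1 t2 :: real and \<theta>1 \<theta>2 :: "int list" assume "t1 \<in> {0..T}" "t2 \<in> {0..T}" "\<theta>1 \<noteq> []" "\<theta>2 \<noteq> []"
      then show "arch (\<Phi> t1 \<theta>1) = arch (\<Phi> t2 \<theta>2)" using P unfolding Pr_def by metis
    qed
  qed
qed


end
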